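(* The rational map $(F,t)\mapsto W_{F,t}$ from $U$ to the moduli space of smooth cubic threefolds is dominant.
   Context: Let $Q\subset\mathbb{P}^3$ be $x_0x_3=x_1x_2$. $U_0$ is the space of cubic forms $F(x_0,\dots,x_3)$ such that the curve cut out by $F$ on $Q$ is smooth, does not pass through $[0,0,0,1]$, and is tangent with multiplicity $2$ to the lines $x_0=x_1=0$ and $x_0=x_2=0$; $U=U_0\times\mathbb{A}^1$ with coordinate $t$. For $(F,t)\in U$, $W_{F,t}\subset\mathbb{P}^4$ (coordinates $x_0,\dots,x_3,x_5$) is the cubic threefold $F(x_0,\dots,x_3)-x_5(x_0x_3-x_1x_2)-t\,x_0x_5^2=0$. *)

theory Defs
  imports Complex_Main
begin

text \<open>Homogeneous forms of degree d in the variables x_0,...,x_(n-1) over the complex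
numbers, represented by their coefficient vectors indexed by exponent vectors.\<close>

definition mons :: "nat \<Rightarrow> nat \<Rightarrow> (nat \<Rightarrow> nat) set" where
  "mons n d = {\<alpha>. (\<forall>i\<ge>n. \<alpha> i = 0) \<and> (\<Sum>i<n. \<alpha> i) = d}"

definition forms :: "nat \<Rightarrow> nat \<Rightarrow> ((nat \<Rightarrow> nat) \<Rightarrow> complex) set" where
  "forms n d = {c. \<forall>\<alpha>. \<alpha> \<notin> mons n d \<longrightarrow> c \<alpha> = 0}"

definition form_eval :: "nat \<Rightarrow> nat \<Rightarrow> ((nat \<Rightarrow> nat) \<Rightarrow> complex) \<Rightarrow> (nat \<Rightarrow> complex) \<Rightarrow> complex" where
  "form_eval n d c x = (\<Sum>\<alpha>\<in>mons n d. c \<alpha> * (\<Prod>i<n. x i ^ \<alpha> i))"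

definition form_deriv :: "nat \<Rightarrow> nat \<Rightarrow> ((nat \<Rightarrow> nat) \<Rightarrow> complex) \<Rightarrow> nat \<Rightarrow> (nat \<Rightarrow> complex) \<Rightarrow> complex" where
  "form_deriv n d c j x =
     (\<Sum>\<alpha>\<in>mons n d. c \<alpha> * of_nat (\<alpha> j) *
        (\<Prod>i<n. if i = j then x i ^ (\<alpha> i - 1) else x i ^ \<alpha> i))"

definition nonzero_vec :: "nat \<Rightarrow> (nat \<Rightarrow> complex) \<Rightarrow> bool" where
  "nonzero_vec n x \<longleftrightarrow> (\<exists>i<n. x i \<noteq> 0)"

definition smooth_form :: "nat \<Rightarrow> nat \<Rightarrow> ((nat \<Rightarrow> nat) \<Rightarrow> complex) \<Rightarrow> bool" where
  "smooth_form n d c \<longleftrightarrow> c \<in> forms n d \<and>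
     (\<forall>x. nonzero_vec n x \<longrightarrow> \<not> (\<forall>j<n. form_deriv n d c j x = 0))"

definition qQ :: "(nat \<Rightarrow> complex) \<Rightarrow> complex" where
  "qQ x = x 0 * x 3 - x 1 * x 2"

definition qgrad :: "(nat \<Rightarrow> complex) \<Rightarrow> nat \<Rightarrow> complex" where
  "qgrad x j = (if j = 0 then x 3 else if j = 1 then - x 2 else if j = 2 then - x 1
                else if j = 3 then x 0 else 0)"

text \<open>The curve cut out by the cubic F on Q is smooth (Jacobian criterion for the
complete intersection F = q = 0 in P^3).\<close>
definition smooth_curve_on_Q :: "((nat \<Rightarrow> nat) \<Rightarrow> complex) \<Rightarrow> bool" where
  "smooth_curve_on_Q F \<longleftrightarrow>
     (\<forall>x. nonzero_vec 4 x \<and> form_eval 4 3 F x = 0 \<and> qQ x = 0 \<longrightarrow>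
        \<not> (\<exists>l m. (l, m) \<noteq> (0, 0) \<and>
              (\<forall>j<4. l * form_deriv 4 3 F j x + m * qgrad x j = 0)))"

definition line1 :: "complex \<Rightarrow> complex \<Rightarrow> nat \<Rightarrow> complex" where
  "line1 s u = (\<lambda>i. if i = 2 then s else if i = 3 then u else 0)"

definition line2 :: "complex \<Rightarrow> complex \<Rightarrow> nat \<Rightarrow> complex" where
  "line2 s u = (\<lambda>i. if i = 1 then s else if i = 3 then u else 0)"

text \<open>Tangency with multiplicity 2: the restriction of F to the line is a binary cubic
with a root of multiplicity exactly 2.\<close>
definition tangent2 :: "((nat \<Rightarrow> nat) \<Rightarrow> complex) \<Rightarrow> (complex \<Rightarrow> complex \<Rightarrow> nat \<Rightarrow> complex) \<Rightarrow> bool" where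
  "tangent2 F L \<longleftrightarrow> (\<exists>a b c d. a * d - b * c \<noteq> 0 \<and>
      (\<forall>s u. form_eval 4 3 F (L s u) = (a * s + b * u)^2 * (c * s + d * u)))"

definition U0 :: "((nat \<Rightarrow> nat) \<Rightarrow> complex) set" where
  "U0 = {F \<in> forms 4 3. smooth_curve_on_Q F
          \<and> form_eval 4 3 F (\<lambda>i. if i = 3 then 1 else 0) \<noteq> 0
          \<and> tangent2 F line1 \<and> tangent2 F line2}"

text \<open>The cubic threefold W_{F,t}; the coordinate x5 of the paper is index 4 here.\<close>
definition Wform :: "((nat \<Rightarrow> nat) \<Rightarrow> complex) \<Rightarrow> complex \<Rightarrow> (nat \<Rightarrow> complex) \<Rightarrow> complex" where
  "Wform F t x = form_eval 4 3 F x - x 4 * qQ x - t * x 0 * (x 4)^2"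

definition matvec :: "nat \<Rightarrow> (nat \<Rightarrow> nat \<Rightarrow> complex) \<Rightarrow> (nat \<Rightarrow> complex) \<Rightarrow> nat \<Rightarrow> complex" where
  "matvec n A x = (\<lambda>i. \<Sum>j<n. A i j * x j)"

definition invertible_mat :: "nat \<Rightarrow> (nat \<Rightarrow> nat \<Rightarrow> complex) \<Rightarrow> bool" where
  "invertible_mat n A \<longleftrightarrow> (\<exists>B. \<forall>i<n. \<forall>k<n.
      (\<Sum>j<n. A i j * B j k) = (if i = k then 1 else 0))"

inductive poly_fun :: "(('i \<Rightarrow> complex) \<Rightarrow> complex) \<Rightarrow> bool" where
  pconst: "poly_fun (\<lambda>_. a)"
| pvar: "poly_fun (\<lambda>c. c i)"
| padd: "poly_fun p \<Longrightarrow> poly_fun q \<Longrightarrow> poly_fun (\<lambda>c. p c + q c)"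
| pmult: "poly_fun p \<Longrightarrow> poly_fun q \<Longrightarrow> poly_fun (\<lambda>c. p c * q c)"

definition zariski_dense_in :: "('i \<Rightarrow> complex) set \<Rightarrow> ('i \<Rightarrow> complex) set \<Rightarrow> bool" where
  "zariski_dense_in T V \<longleftrightarrow> T \<subseteq> V \<and>
     (\<forall>p. poly_fun p \<and> (\<forall>c\<in>T. p c = 0) \<longrightarrow> (\<forall>c\<in>V. p c = 0))"

definition image_cubics :: "((nat \<Rightarrow> nat) \<Rightarrow> complex) set" where
  "image_cubics = {c. smooth_form 5 3 c \<and>
     (\<exists>F t A lam. F \<in> U0 \<and> invertible_mat 5 A \<and> lam \<noteq> 0 \<and>
        (\<forall>x. form_eval 5 3 c x = lam * Wform F t (matvec 5 A x)))}"

end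

theory Submission
  imports Defs "HOL-Analysis.Analysis" "HOL-Computational_Algebra.Polynomial"
begin

section \<open>Monomials and forms: generic facts\<close>

definition mpow :: "nat \<Rightarrow> (nat \<Rightarrow> nat) \<Rightarrow> (nat \<Rightarrow> complex) \<Rightarrow> complex" where
  "mpow n \<alpha> x = (\<Prod>i<n. x i ^ \<alpha> i)"

lemma form_eval_mpow: "form_eval n d c x = (\<Sum>\<alpha>\<in>mons n d. c \<alpha> * mpow n \<alpha> x)"
  by (simp add: form_eval_def mpow_def)

definition bfuns :: "nat \<Rightarrow> nat \<Rightarrow> (nat \<Rightarrow> nat) set" where
  "bfuns n d = {\<alpha>. (\<forall>i\<ge>n. \<alpha> i = 0) \<and> (\<forall>i. \<alpha> i \<le> d)}"

lemma finite_bfuns: "finite (bfuns n d)"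
proof (induction n)
  case 0
  have "bfuns 0 d \<subseteq> {\<lambda>_. 0}" by (auto simp: bfuns_def)
  then show ?case using finite_subset by blast
next
  case (Suc n)
  have "bfuns (Suc n) d \<subseteq> (\<lambda>(a, \<beta>). \<beta>(n := a)) ` ({..d} \<times> bfuns n d)"
  proof
    fix \<alpha> assume a: "\<alpha> \<in> bfuns (Suc n) d"
    have "\<alpha> = (\<alpha>(n := 0))(n := \<alpha> n)" by simp
    moreover have "(\<alpha> n, \<alpha>(n := 0)) \<in> {..d} \<times> bfuns n d"
      using a by (auto simp: bfuns_def)
    ultimately show "\<alpha> \<in> (\<lambda>(a, \<beta>). \<beta>(n := a)) ` ({..d} \<times> bfuns n d)"
      using rev_image_eqI[of "(\<alpha> n, \<alpha>(n:=0))" "{..d} \<times> bfuns n d" \<alpha> "\<lambda>(a, \<beta>). \<beta>(n := a)"] by simp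
  qed
  moreover have "finite ((\<lambda>(a, \<beta>). \<beta>(n := a)) ` ({..d} \<times> bfuns n d))"
    using Suc.IH by simp
  ultimately show ?case by (rule finite_subset)
qed

lemma mons_sub_bfuns: "mons n d \<subseteq> bfuns n d"
proof
  fix \<alpha> assume a: "\<alpha> \<in> mons n d"
  have "\<alpha> i \<le> d" for i
  proof (cases "i < n")
    case True
    then have "\<alpha> i \<le> (\<Sum>i<n. \<alpha> i)" by (intro member_le_sum) simp_all
    then show ?thesis using a by (simp add: mons_def)
  next
    case False then show ?thesis using a by (simp add: mons_def)
  qed
  then show "\<alpha> \<in> bfuns n d" using a by (simp add: mons_def bfuns_def)
qed

lemma finite_mons[simp]: "finite (mons n d)"
  by (rule finite_subset[OF mons_sub_bfuns finite_bfuns])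

definition isform :: "nat \<Rightarrow> nat \<Rightarrow> ((nat \<Rightarrow> complex) \<Rightarrow> complex) \<Rightarrow> bool" where
  "isform n d g \<longleftrightarrow> (\<exists>c\<in>forms n d. \<forall>x. g x = form_eval n d c x)"

lemma isform_zero: "isform n d (\<lambda>_. 0)"
  unfolding isform_def forms_def form_eval_def by (rule bexI[of _ "\<lambda>_. 0"]) auto

lemma isform_add:
  assumes "isform n d f" "isform n d g"
  shows "isform n d (\<lambda>x. f x + g x)"
proof -
  obtain c1 where c1: "c1 \<in> forms n d" "\<And>x. f x = form_eval n d c1 x" using assms(1) isform_def by blast
  obtain c2 where c2: "c2 \<in> forms n d" "\<And>x. g x = form_eval n d c2 x" using assms(2) isform_def by blast
  show ?thesis unfolding isform_def
    by (rule bexI[of _ "\<lambda>\<alpha>. c1 \<alpha> + c2 \<alpha>"])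
      (use c1 c2 in \<open>auto simp: forms_def form_eval_def sum.distrib distrib_right\<close>)
qed

lemma isform_scale:
  assumes "isform n d f"
  shows "isform n d (\<lambda>x. a * f x)"
proof -
  obtain c1 where c1: "c1 \<in> forms n d" "\<And>x. f x = form_eval n d c1 x" using assms(1) isform_def by blast
  show ?thesis unfolding isform_def
    by (rule bexI[of _ "\<lambda>\<alpha>. a * c1 \<alpha>"])
      (use c1 in \<open>auto simp: forms_def form_eval_def sum_distrib_left mult.assoc\<close>)
qed

lemma isform_sum:
  assumes "finite I" "\<And>i. i \<in> I \<Longrightarrow> isform n d (g i)"
  shows "isform n d (\<lambda>x. \<Sum>i\<in>I. g i x)"
  using assms
proof (induction I rule: finite_induct)
  case empty then show ?case by (simp add: isform_zero)
next
  case (insert a F)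
  then show ?case by (simp add: isform_add)
qed

lemma mons_0: "mons n 0 = {\<lambda>_. 0}"
  apply (auto simp: mons_def fun_eq_iff)
  by (metis lessThan_iff not_le)

lemma isform_const: "isform n 0 (\<lambda>_. a)"
  unfolding isform_def
  by (rule bexI[of _ "\<lambda>\<alpha>. if \<alpha> = (\<lambda>_. 0) then a else 0"])
    (auto simp: forms_def form_eval_def mons_0)

definition ej :: "nat \<Rightarrow> nat \<Rightarrow> nat" where "ej j = (\<lambda>i. if i = j then 1 else 0)"

lemma ej_mons: "j < n \<Longrightarrow> ej j \<in> mons n 1"
  by (auto simp: mons_def ej_def)

lemma isform_var: "j < n \<Longrightarrow> isform n 1 (\<lambda>x. x j)"
  unfolding isform_def
proof (rule bexI[of _ "\<lambda>\<alpha>. if \<alpha> = ej j then 1 else 0"])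
  assume j: "j < n"
  show "\<forall>x. x j = form_eval n 1 (\<lambda>\<alpha>. if \<alpha> = ej j then 1 else 0) x"
  proof
    fix x :: "nat \<Rightarrow> complex"
    have "form_eval n 1 (\<lambda>\<alpha>. if \<alpha> = ej j then 1 else 0) x
        = (\<Sum>\<alpha>\<in>mons n 1. if \<alpha> = ej j then mpow n \<alpha> x else 0)"
      unfolding form_eval_mpow by (rule sum.cong) auto
    also have "\<dots> = mpow n (ej j) x" using ej_mons[OF j] by (simp add: sum.delta')
    also have "\<dots> = (\<Prod>i<n. x i ^ ej j i)" by (simp add: mpow_def)
    also have "\<dots> = (\<Prod>i<n. if i = j then x i else 1)"
      by (rule prod.cong) (auto simp: ej_def)
    also have "\<dots> = x j" using j by (simp add: prod.delta')
    finally show "x j = form_eval n 1 (\<lambda>\<alpha>. if \<alpha> = ej j then 1 else 0) x" by simp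
  qed
  show "(\<lambda>\<alpha>. if \<alpha> = ej j then 1 else 0) \<in> forms n 1" if "j < n"
    using ej_mons[OF that] by (auto simp: forms_def)
qed

lemma mpow_add: "mpow n (\<lambda>i. \<alpha> i + \<beta> i) x = mpow n \<alpha> x * mpow n \<beta> x"
  by (simp add: mpow_def power_add prod.distrib)

lemma mons_add: "\<alpha> \<in> mons n d1 \<Longrightarrow> \<beta> \<in> mons n d2 \<Longrightarrow> (\<lambda>i. \<alpha> i + \<beta> i) \<in> mons n (d1 + d2)"
  by (auto simp: mons_def sum.distrib)

lemma isform_mult:
  assumes "isform n d1 f" "isform n d2 g"
  shows "isform n (d1 + d2) (\<lambda>x. f x * g x)"
proof -
  obtain c1 where c1: "c1 \<in> forms n d1" "\<And>x. f x = form_eval n d1 c1 x" using assms(1) isform_def by blast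
  obtain c2 where c2: "c2 \<in> forms n d2" "\<And>x. g x = form_eval n d2 c2 x" using assms(2) isform_def by blast
  define M where "M = mons n d1 \<times> mons n d2"
  define s where "s = (\<lambda>p::(nat\<Rightarrow>nat)\<times>(nat\<Rightarrow>nat). (\<lambda>i. fst p i + snd p i))"
  define h where "h = (\<lambda>p::(nat\<Rightarrow>nat)\<times>(nat\<Rightarrow>nat). c1 (fst p) * c2 (snd p))"
  define c where "c = (\<lambda>\<gamma>. if \<gamma> \<in> mons n (d1 + d2) then (\<Sum>p\<in>{p \<in> M. s p = \<gamma>}. h p) else 0)"
  have fM: "finite M" by (simp add: M_def)
  have sM: "s ` M \<subseteq> mons n (d1 + d2)" by (auto simp: M_def s_def intro: mons_add)
  have "form_eval n (d1 + d2) c x = f x * g x" for x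
  proof -
    have "form_eval n (d1 + d2) c x = (\<Sum>\<gamma>\<in>mons n (d1 + d2). (\<Sum>p\<in>{p \<in> M. s p = \<gamma>}. h p) * mpow n \<gamma> x)"
      by (simp add: form_eval_mpow c_def)
    also have "\<dots> = (\<Sum>\<gamma>\<in>mons n (d1 + d2). (\<Sum>p\<in>{p \<in> M. s p = \<gamma>}. h p * mpow n (s p) x))"
      by (simp add: sum_distrib_right)
    also have "\<dots> = (\<Sum>p\<in>M. h p * mpow n (s p) x)"
      by (rule sum.group[OF fM _ sM]) simp
    also have "\<dots> = (\<Sum>p\<in>M. (c1 (fst p) * mpow n (fst p) x) * (c2 (snd p) * mpow n (snd p) x))"
      by (simp add: h_def s_def mpow_add mult_ac)
    also have "\<dots> = form_eval n d1 c1 x * form_eval n d2 c2 x"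
      by (simp add: M_def form_eval_mpow sum_product sum.cartesian_product case_prod_beta)
    finally show ?thesis using c1 c2 by simp
  qed
  moreover have "c \<in> forms n (d1 + d2)" by (simp add: forms_def c_def)
  ultimately show ?thesis unfolding isform_def by metis
qed

lemma isform_prod:
  assumes "finite I" "\<And>i. i \<in> I \<Longrightarrow> isform n (d i) (g i)"
  shows "isform n (\<Sum>i\<in>I. d i) (\<lambda>x. \<Prod>i\<in>I. g i x)"
  using assms
proof (induction I rule: finite_induct)
  case empty then show ?case by (simp add: isform_const)
next
  case (insert a F)
  then show ?case by (simp add: isform_mult)
qed

lemma isform_pow:
  assumes "isform n d g"
  shows "isform n (k * d) (\<lambda>x. g x ^ k)"
proof (induction k)
  case 0 then show ?case by (simp add: isform_const)
next
  case (Suc k)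
  have "isform n (d + k * d) (\<lambda>x. g x * g x ^ k)" by (rule isform_mult[OF assms Suc])
  then show ?case by (simp add: add.commute)
qed

lemma isform_cong: "isform n d f \<Longrightarrow> (\<And>x. f x = g x) \<Longrightarrow> isform n d g"
  by (metis ext)

lemma isform_deg_cong: "isform n d f \<Longrightarrow> d = d' \<Longrightarrow> isform n d' f"
  by simp

lemma form_eval_cong: "(\<And>i. i < n \<Longrightarrow> x i = y i) \<Longrightarrow> form_eval n d c x = form_eval n d c y"
  unfolding form_eval_def by (intro sum.cong refl arg_cong2[where f="(*)"] prod.cong) auto

lemma form_deriv_cong: "(\<And>i. i < n \<Longrightarrow> x i = y i) \<Longrightarrow> form_deriv n d c j x = form_deriv n d c j y"
  unfolding form_deriv_def by (intro sum.cong refl arg_cong2[where f="(*)"] prod.cong) auto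

lemma mpow_scale: "\<alpha> \<in> mons n d \<Longrightarrow> mpow n \<alpha> (\<lambda>i. r * x i) = r ^ d * mpow n \<alpha> x"
  unfolding mpow_def mons_def
  by (auto simp: power_mult_distrib prod.distrib power_sum[symmetric])

lemma form_eval_scale: "form_eval n d c (\<lambda>i. r * x i) = r ^ d * form_eval n d c x"
  unfolding form_eval_mpow
  by (simp add: mpow_scale sum_distrib_left mult_ac cong: sum.cong)

lemma form_deriv_scale:
  assumes "d \<ge> 1"
  shows "form_deriv n d c j (\<lambda>i. r * x i) = r ^ (d - 1) * form_deriv n d c j x"
  unfolding form_deriv_def sum_distrib_left
proof (rule sum.cong[OF refl])
  fix \<alpha> assume a: "\<alpha> \<in> mons n d"
  show "c \<alpha> * of_nat (\<alpha> j) * (\<Prod>i<n. if i = j then (r * x i) ^ (\<alpha> i - 1) else (r * x i) ^ \<alpha> i) =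
        r ^ (d - 1) * (c \<alpha> * of_nat (\<alpha> j) * (\<Prod>i<n. if i = j then x i ^ (\<alpha> i - 1) else x i ^ \<alpha> i))"
  proof (cases "\<alpha> j = 0")
    case True then show ?thesis by simp
  next
    case False
    have j: "j < n"
    proof (rule ccontr)
      assume "\<not> j < n" then have "\<alpha> j = 0" using a by (simp add: mons_def)
      with False show False by simp
    qed
    define e where "e = (\<lambda>i. if i = j then \<alpha> i - 1 else \<alpha> i)"
    have s: "(\<Sum>i<n. e i) = d - 1"
    proof -
      have "(\<Sum>i<n. \<alpha> i) = \<alpha> j + (\<Sum>i\<in>{..<n} - {j}. \<alpha> i)"
        using j by (simp add: sum.remove)
      moreover have "(\<Sum>i<n. e i) = e j + (\<Sum>i\<in>{..<n} - {j}. e i)"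
        using j by (simp add: sum.remove)
      moreover have "(\<Sum>i\<in>{..<n} - {j}. e i) = (\<Sum>i\<in>{..<n} - {j}. \<alpha> i)"
        by (rule sum.cong) (auto simp: e_def)
      ultimately show ?thesis using a False by (simp add: mons_def e_def)
    qed
    have "(\<Prod>i<n. if i = j then (r * x i) ^ (\<alpha> i - 1) else (r * x i) ^ \<alpha> i) = (\<Prod>i<n. (r * x i) ^ e i)"
      by (rule prod.cong) (auto simp: e_def)
    also have "\<dots> = r ^ (\<Sum>i<n. e i) * (\<Prod>i<n. x i ^ e i)"
      by (simp add: power_mult_distrib prod.distrib power_sum)
    also have "(\<Prod>i<n. x i ^ e i) = (\<Prod>i<n. if i = j then x i ^ (\<alpha> i - 1) else x i ^ \<alpha> i)"
      by (rule prod.cong) (auto simp: e_def)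
    finally show ?thesis using s by (simp add: mult_ac)
  qed
qed

section \<open>Restriction of polynomial functions to lines\<close>

lemma poly_fun_line: "poly_fun p \<Longrightarrow> \<exists>Q. \<forall>\<tau>. p (\<lambda>i. a i + \<tau> * b i) = poly Q \<tau>"
proof (induction rule: poly_fun.induct)
  case (pconst c)
  show ?case by (rule exI[of _ "[:c:]"]) simp
next
  case (pvar i)
  show ?case by (rule exI[of _ "[:a i, b i:]"]) (simp add: mult.commute)
next
  case (padd p q)
  then obtain P Q where "\<forall>\<tau>. p (\<lambda>i. a i + \<tau> * b i) = poly P \<tau>" "\<forall>\<tau>. q (\<lambda>i. a i + \<tau> * b i) = poly Q \<tau>"
    by blast
  then show ?case by (intro exI[of _ "P + Q"]) simp
next
  case (pmult p q)
  then obtain P Q where "\<forall>\<tau>. p (\<lambda>i. a i + \<tau> * b i) = poly P \<tau>" "\<forall>\<tau>. q (\<lambda>i. a i + \<tau> * b i) = poly Q \<tau>"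
    by blast
  then show ?case by (intro exI[of _ "P * Q"]) simp
qed

lemma poly_zero_on_ball:
  fixes Q :: "complex poly"
  assumes "e > 0" "\<And>\<tau>. norm \<tau> < e \<Longrightarrow> poly Q \<tau> = 0"
  shows "Q = 0"
proof (rule ccontr)
  assume "Q \<noteq> 0"
  then have "finite {x. poly Q x = 0}" by (rule poly_roots_finite)
  moreover have "ball 0 e \<subseteq> {x. poly Q x = 0}" using assms(2) by auto
  ultimately have "finite (UNIV \<inter> ball (0::complex) e)" by (simp add: finite_subset)
  moreover have "(0::complex) islimpt UNIV" by (simp add: islimpt_UNIV)
  ultimately show False using assms(1) islimpt_eq_infinite_ball by blast
qed

section \<open>Openness via the tube lemma\<close>

lemma nonvanish_near:
  fixes h :: "'a::metric_space \<times> 'b::topological_space \<Rightarrow> real"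
  assumes "continuous_on UNIV h" "compact K" "\<And>y. y \<in> K \<Longrightarrow> h (a, y) \<noteq> 0"
  shows "\<exists>e>0. \<forall>u. dist u a < e \<longrightarrow> (\<forall>y\<in>K. h (u, y) \<noteq> 0)"
proof -
  define W where "W = h -` (UNIV - {0})"
  have "open W" unfolding W_def by (rule open_vimage) (use assms(1) in auto)
  moreover have "{a} \<times> K \<subseteq> W" using assms(3) by (auto simp: W_def)
  ultimately obtain X0 where X0: "a \<in> X0" "open X0" "X0 \<times> K \<subseteq> W"
    using Elementary_Topology.tube_lemma[OF assms(2)] by metis
  then obtain e where e: "e > 0" "ball a e \<subseteq> X0" using open_contains_ball by blast
  show ?thesis
  proof (intro exI[of _ e] conjI allI impI ballI)
    fix u y assume "dist u a < e" "y \<in> K"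
    then have "(u, y) \<in> W" using e X0 by (auto simp: dist_commute)
    then show "h (u, y) \<noteq> 0" by (simp add: W_def)
  qed (use e in auto)
qed

lemma has_derivative_vecI:
  fixes f :: "'a::real_normed_vector \<Rightarrow> 'b::euclidean_space ^ 'n"
  assumes "\<And>i. ((\<lambda>x. f x $ i) has_derivative (\<lambda>h. f' h $ i)) (at a)"
  shows "(f has_derivative f') (at a)"
proof -
  have "((\<lambda>x. f x \<bullet> b) has_derivative (\<lambda>h. f' h \<bullet> b)) (at a within UNIV)" if "b \<in> Basis" for b
  proof -
    from that obtain i c where b: "b = axis i c" "c \<in> Basis" by (auto simp: Basis_vec_def)
    have "((\<lambda>x. (f x $ i) \<bullet> c) has_derivative (\<lambda>h. (f' h $ i) \<bullet> c)) (at a)"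
      by (rule has_derivative_inner_left[OF assms])
    then show ?thesis by (simp add: b inner_axis)
  qed
  then show ?thesis using has_derivative_componentwise_within[of f f' a UNIV] by blast
qed

lemma delta_multL: "(if i = j then (1::complex) else 0) * f = (if j = i then f else 0)" by simp
lemma delta_multR: "f * (if j = k then (1::complex) else 0) = (if j = k then f else 0)" by simp

definition mm :: "nat \<Rightarrow> (nat \<Rightarrow> nat \<Rightarrow> complex) \<Rightarrow> (nat \<Rightarrow> nat \<Rightarrow> complex) \<Rightarrow> nat \<Rightarrow> nat \<Rightarrow> complex" where
  "mm n X Y = (\<lambda>i k. \<Sum>j<n. X i j * Y j k)"

lemma matvec_mm: "matvec n (mm n X Y) x = matvec n X (matvec n Y x)"
proof
  fix i
  have "matvec n (mm n X Y) x i = (\<Sum>k<n. \<Sum>j<n. X i j * Y j k * x k)"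
    by (simp add: matvec_def mm_def sum_distrib_right)
  also have "\<dots> = (\<Sum>j<n. \<Sum>k<n. X i j * Y j k * x k)" by (rule sum.swap)
  also have "\<dots> = matvec n X (matvec n Y x) i"
    by (simp add: matvec_def sum_distrib_left mult.assoc)
  finally show "matvec n (mm n X Y) x i = matvec n X (matvec n Y x) i" .
qed

lemma invertible_mat_mm:
  assumes "invertible_mat n X" "invertible_mat n Y"
  shows "invertible_mat n (mm n X Y)"
proof -
  obtain BX where BX: "\<And>i k. i < n \<Longrightarrow> k < n \<Longrightarrow> (\<Sum>j<n. X i j * BX j k) = (if i = k then 1 else 0)"
    using assms(1) unfolding invertible_mat_def by blast
  obtain BY where BY: "\<And>i k. i < n \<Longrightarrow> k < n \<Longrightarrow> (\<Sum>j<n. Y i j * BY j k) = (if i = k then 1 else 0)"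
    using assms(2) unfolding invertible_mat_def by blast
  have "(\<Sum>j<n. mm n X Y i j * mm n BY BX j k) = (if i = k then 1 else 0)" if "i < n" "k < n" for i k
  proof -
    have "(\<Sum>j<n. mm n X Y i j * mm n BY BX j k) = (\<Sum>j<n. \<Sum>l<n. \<Sum>m<n. X i l * (Y l j * BY j m) * BX m k)"
      by (simp add: mm_def sum_distrib_left sum_distrib_right mult_ac)
    also have "\<dots> = (\<Sum>l<n. \<Sum>m<n. \<Sum>j<n. X i l * (Y l j * BY j m) * BX m k)"
      by (rule trans[OF sum.swap], rule sum.cong[OF refl], rule sum.swap)
    also have "\<dots> = (\<Sum>l<n. \<Sum>m<n. X i l * (\<Sum>j<n. Y l j * BY j m) * BX m k)"
      by (simp add: sum_distrib_left sum_distrib_right)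
    also have "\<dots> = (\<Sum>l<n. \<Sum>m<n. X i l * (if l = m then 1 else 0) * BX m k)"
      by (intro sum.cong refl) (simp add: BY)
    also have "\<dots> = (\<Sum>l<n. X i l * BX l k)"
    proof (rule sum.cong[OF refl])
      fix l assume l: "l \<in> {..<n}"
      have "(\<Sum>m<n. X i l * (if l = m then 1 else 0) * BX m k) = (\<Sum>m<n. if m = l then X i l * BX l k else 0)"
        by (rule sum.cong) auto
      then show "(\<Sum>m<n. X i l * (if l = m then 1 else 0) * BX m k) = X i l * BX l k" using l by simp
    qed
    also have "\<dots> = (if i = k then 1 else 0)" using that BX by simp
    finally show ?thesis .
  qed
  then show ?thesis unfolding invertible_mat_def by blast
qed

definition lay :: "(nat \<times> nat) set \<Rightarrow> (nat \<Rightarrow> nat \<Rightarrow> complex) \<Rightarrow> nat \<Rightarrow> nat \<Rightarrow> complex" where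
  "lay S N = (\<lambda>i j. (if i = j then 1 else 0) + (if (i, j) \<in> S then N i j else 0))"

lemma invertible_lay_sqz:
  assumes "\<And>i j k. (i, j) \<in> S \<Longrightarrow> (j, k) \<notin> S"
  shows "invertible_mat n (lay S N)"
proof -
  define s where "s = (\<lambda>i j. if (i, j) \<in> S then N i j else 0)"
  define \<delta> where "\<delta> = (\<lambda>i j::nat. if i = j then 1 else (0::complex))"
  define B where "B = (\<lambda>i j. \<delta> i j - s i j)"
  have "(\<Sum>j<n. lay S N i j * B j k) = (if i = k then 1 else 0)" if "i < n" "k < n" for i k
  proof -
    have e: "lay S N i j * B j k = \<delta> i j * \<delta> j k - \<delta> i j * s j k + s i j * \<delta> j k - s i j * s j k" for j
      by (simp add: lay_def B_def s_def \<delta>_def algebra_simps)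
    have 1: "(\<Sum>j<n. \<delta> i j * \<delta> j k) = \<delta> i k" using that by (simp add: \<delta>_def delta_multL)
    have 2: "(\<Sum>j<n. \<delta> i j * s j k) = s i k" using that by (simp add: \<delta>_def delta_multL)
    have 3: "(\<Sum>j<n. s i j * \<delta> j k) = s i k" using that by (simp add: \<delta>_def delta_multR)
    have 4: "(\<Sum>j<n. s i j * s j k) = 0"
      by (rule sum.neutral) (auto simp: s_def dest: assms)
    have "(\<Sum>j<n. lay S N i j * B j k) = (\<Sum>j<n. \<delta> i j * \<delta> j k) - (\<Sum>j<n. \<delta> i j * s j k)
       + (\<Sum>j<n. s i j * \<delta> j k) - (\<Sum>j<n. s i j * s j k)"
      by (simp only: e sum.distrib sum_subtractf)
    also have "\<dots> = \<delta> i k" by (simp only: 1 2 3 4) simp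
    finally show ?thesis by (simp add: \<delta>_def)
  qed
  then show ?thesis unfolding invertible_mat_def by blast
qed

lemma invertible_lay_diag:
  assumes "\<And>i j. (i, j) \<in> S \<longleftrightarrow> i = j" "\<And>i. i < n \<Longrightarrow> 1 + N i i \<noteq> 0"
  shows "invertible_mat n (lay S N)"
proof -
  define B where "B = (\<lambda>i j. if i = j then 1 / (1 + N i i) else 0 :: complex)"
  have "(\<Sum>j<n. lay S N i j * B j k) = (if i = k then 1 else 0)" if "i < n" "k < n" for i k
  proof -
    have "(\<Sum>j<n. lay S N i j * B j k) = (\<Sum>j<n. if j = i then (1 + N i i) * B i k else 0)"
      by (rule sum.cong) (auto simp: lay_def assms(1))
    also have "\<dots> = (1 + N i i) * B i k" using that by simp
    also have "\<dots> = (if i = k then 1 else 0)" using assms(2)[OF that(1)] by (auto simp: B_def)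
    finally show ?thesis .
  qed
  then show ?thesis unfolding invertible_mat_def by blast
qed

lemma matvec_lay: "matvec n (lay S N) y i = (if i < n then y i else 0) + (\<Sum>j<n. (if (i, j) \<in> S then N i j else 0) * y j)"
proof -
  have "matvec n (lay S N) y i = (\<Sum>j<n. (if i = j then 1 else 0) * y j) + (\<Sum>j<n. (if (i, j) \<in> S then N i j else 0) * y j)"
    unfolding matvec_def lay_def by (simp add: distrib_right sum.distrib)
  moreover have "(\<Sum>j<n. (if i = j then 1 else 0) * y j) = (\<Sum>j<n. (if j = i then y i else 0))"
    by (rule sum.cong) auto
  ultimately show ?thesis by simp
qed

datatype ix = X0 | X1 | X2 | X3 | X4 | X5 | X6 | X7 | X8 | X9 | X10 | X11 | X12 | X13 | X14 | X15 | X16 | X17 | X18 | X19 | X20 | X21 | X22 | X23 | X24 | X25 | X26 | X27 | X28 | X29 | X30 | X31 | X32 | X33 | X34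

lemma UNIV_ix: "(UNIV :: ix set) = {X0, X1, X2, X3, X4, X5, X6, X7, X8, X9, X10, X11, X12, X13, X14, X15, X16, X17, X18, X19, X20, X21, X22, X23, X24, X25, X26, X27, X28, X29, X30, X31, X32, X33, X34}"
  by (auto intro: ix.exhaust)

instance ix :: finite
  by standard (simp add: UNIV_ix)

definition mk5 :: "nat \<Rightarrow> nat \<Rightarrow> nat \<Rightarrow> nat \<Rightarrow> nat \<Rightarrow> nat \<Rightarrow> nat" where
  "mk5 a b c d e = (\<lambda>i. if i = 0 then a else if i = 1 then b else if i = 2 then c else if i = 3 then d else if i = 4 then e else 0)"

lemma mk5_simps[simp]: "mk5 a b c d e 0 = a" "mk5 a b c d e (Suc 0) = b" "mk5 a b c d e 2 = c"
  "mk5 a b c d e 3 = d" "mk5 a b c d e 4 = e"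
  by (simp_all add: mk5_def)

lemma mk5_eq[simp]: "mk5 a b c d e = mk5 a' b' c' d' e' \<longleftrightarrow> a = a' \<and> b = b' \<and> c = c' \<and> d = d' \<and> e = e'"
proof
  assume h: "mk5 a b c d e = mk5 a' b' c' d' e'"
  have "mk5 a b c d e i = mk5 a' b' c' d' e' i" for i using h by simp
  from this[of 0] this[of 1] this[of 2] this[of 3] this[of 4]
  show "a = a' \<and> b = b' \<and> c = c' \<and> d = d' \<and> e = e'" by simp
qed simp

abbreviation mk4 :: "nat \<Rightarrow> nat \<Rightarrow> nat \<Rightarrow> nat \<Rightarrow> nat \<Rightarrow> nat" where
  "mk4 a b c d \<equiv> mk5 a b c d 0"

definition pt :: "complex \<Rightarrow> complex \<Rightarrow> complex \<Rightarrow> complex \<Rightarrow> complex \<Rightarrow> nat \<Rightarrow> complex" where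
  "pt a b c d e = (\<lambda>i. if i = 0 then a else if i = 1 then b else if i = 2 then c else if i = 3 then d else if i = 4 then e else 0)"

lemma pt_simps[simp]: "pt a b c d e 0 = a" "pt a b c d e (Suc 0) = b" "pt a b c d e 2 = c"
  "pt a b c d e 3 = d" "pt a b c d e 4 = e"
  by (simp_all add: pt_def)

lemma sum5: "(\<Sum>i<(5::nat). f i) = f 0 + f 1 + f 2 + f 3 + (f 4 :: 'a::comm_monoid_add)"
  by (simp add: eval_nat_numeral add_ac)
lemma prod5: "(\<Prod>i<(5::nat). f i) = f 0 * f 1 * f 2 * f 3 * (f 4 :: 'a::comm_monoid_mult)"
  by (simp add: eval_nat_numeral mult_ac)
lemma sum4: "(\<Sum>i<(4::nat). f i) = f 0 + f 1 + f 2 + (f 3 :: 'a::comm_monoid_add)"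
  by (simp add: eval_nat_numeral add_ac)
lemma prod4: "(\<Prod>i<(4::nat). f i) = f 0 * f 1 * f 2 * (f 3 :: 'a::comm_monoid_mult)"
  by (simp add: eval_nat_numeral mult_ac)

primrec alpha :: "ix \<Rightarrow> nat \<Rightarrow> nat" where
  "alpha X0 = mk5 3 0 0 0 0"
| "alpha X1 = mk5 2 1 0 0 0"
| "alpha X2 = mk5 2 0 1 0 0"
| "alpha X3 = mk5 2 0 0 1 0"
| "alpha X4 = mk5 2 0 0 0 1"
| "alpha X5 = mk5 1 2 0 0 0"
| "alpha X6 = mk5 1 1 1 0 0"
| "alpha X7 = mk5 1 1 0 1 0"
| "alpha X8 = mk5 1 1 0 0 1"
| "alpha X9 = mk5 1 0 2 0 0"
| "alpha X10 = mk5 1 0 1 1 0"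
| "alpha X11 = mk5 1 0 1 0 1"
| "alpha X12 = mk5 1 0 0 2 0"
| "alpha X13 = mk5 1 0 0 1 1"
| "alpha X14 = mk5 1 0 0 0 2"
| "alpha X15 = mk5 0 3 0 0 0"
| "alpha X16 = mk5 0 2 1 0 0"
| "alpha X17 = mk5 0 2 0 1 0"
| "alpha X18 = mk5 0 2 0 0 1"
| "alpha X19 = mk5 0 1 2 0 0"
| "alpha X20 = mk5 0 1 1 1 0"
| "alpha X21 = mk5 0 1 1 0 1"
| "alpha X22 = mk5 0 1 0 2 0"
| "alpha X23 = mk5 0 1 0 1 1"
| "alpha X24 = mk5 0 1 0 0 2"
| "alpha X25 = mk5 0 0 3 0 0"
| "alpha X26 = mk5 0 0 2 1 0"
| "alpha X27 = mk5 0 0 2 0 1"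
| "alpha X28 = mk5 0 0 1 2 0"
| "alpha X29 = mk5 0 0 1 1 1"
| "alpha X30 = mk5 0 0 1 0 2"
| "alpha X31 = mk5 0 0 0 3 0"
| "alpha X32 = mk5 0 0 0 2 1"
| "alpha X33 = mk5 0 0 0 1 2"
| "alpha X34 = mk5 0 0 0 0 3"

lemma alpha_inj: "inj alpha"
proof (rule injI)
  fix m m' :: ix assume "alpha m = alpha m'"
  then show "m = m'" by (cases m; cases m'; simp)
qed

lemma tup5: "(a::nat)+b+c+d+e = 3 \<Longrightarrow> (a,b,c,d,e) \<in> {(3,0,0,0,0),(2,1,0,0,0),(2,0,1,0,0),(2,0,0,1,0),(2,0,0,0,1),(1,2,0,0,0),(1,1,1,0,0),(1,1,0,1,0),(1,1,0,0,1),(1,0,2,0,0),(1,0,1,1,0),(1,0,1,0,1),(1,0,0,2,0),(1,0,0,1,1),(1,0,0,0,2),(0,3,0,0,0),(0,2,1,0,0),(0,2,0,1,0),(0,2,0,0,1),(0,1,2,0,0),(0,1,1,1,0),(0,1,1,0,1),(0,1,0,2,0),(0,1,0,1,1),(0,1,0,0,2),(0,0,3,0,0),(0,0,2,1,0),(0,0,2,0,1),(0,0,1,2,0),(0,0,1,1,1),(0,0,1,0,2),(0,0,0,3,0),(0,0,0,2,1),(0,0,0,1,2),(0,0,0,0,3)}"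
  apply (subgoal_tac "a \<le> 3 \<and> b \<le> 3 \<and> c \<le> 3 \<and> d \<le> 3 \<and> e \<le> 3")
   apply (simp only: le_Suc_eq numeral_3_eq_3 le_0_eq)
   apply (elim conjE disjE; simp)
  by linarith

lemma tup4: "(a::nat)+b+c+d = 3 \<Longrightarrow> (a,b,c,d) \<in> {(3,0,0,0),(2,1,0,0),(2,0,1,0),(2,0,0,1),(1,2,0,0),(1,1,1,0),(1,1,0,1),(1,0,2,0),(1,0,1,1),(1,0,0,2),(0,3,0,0),(0,2,1,0),(0,2,0,1),(0,1,2,0),(0,1,1,1),(0,1,0,2),(0,0,3,0),(0,0,2,1),(0,0,1,2),(0,0,0,3)}"
  apply (subgoal_tac "a \<le> 3 \<and> b \<le> 3 \<and> c \<le> 3 \<and> d \<le> 3")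
   apply (simp only: le_Suc_eq numeral_3_eq_3 le_0_eq)
   apply (elim conjE disjE; simp)
  by linarith

lemma mk5_expand: "(\<forall>i\<ge>5. \<alpha> i = 0) \<Longrightarrow> \<alpha> = mk5 (\<alpha> 0) (\<alpha> 1) (\<alpha> 2) (\<alpha> 3) (\<alpha> 4)"
  by (auto simp: mk5_def fun_eq_iff)

lemma mons5: "mons 5 3 = range alpha"
proof
  show "range alpha \<subseteq> mons 5 3"
  proof
    fix \<beta> assume "\<beta> \<in> range alpha"
    then obtain m where m: "\<beta> = alpha m" by blast
    show "\<beta> \<in> mons 5 3" unfolding m mons_def sum5
      by (cases m) (simp_all add: mk5_def)
  qed
  show "mons 5 3 \<subseteq> range alpha"
  proof
    fix \<beta> assume b: "\<beta> \<in> mons 5 3"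
    then have e: "\<beta> = mk5 (\<beta> 0) (\<beta> 1) (\<beta> 2) (\<beta> 3) (\<beta> 4)"
      by (intro mk5_expand) (simp add: mons_def)
    have r: "range alpha = {mk5 3 0 0 0 0, mk5 2 1 0 0 0, mk5 2 0 1 0 0, mk5 2 0 0 1 0, mk5 2 0 0 0 1, mk5 1 2 0 0 0, mk5 1 1 1 0 0, mk5 1 1 0 1 0, mk5 1 1 0 0 1, mk5 1 0 2 0 0, mk5 1 0 1 1 0, mk5 1 0 1 0 1, mk5 1 0 0 2 0, mk5 1 0 0 1 1, mk5 1 0 0 0 2, mk5 0 3 0 0 0, mk5 0 2 1 0 0, mk5 0 2 0 1 0, mk5 0 2 0 0 1, mk5 0 1 2 0 0, mk5 0 1 1 1 0, mk5 0 1 1 0 1, mk5 0 1 0 2 0, mk5 0 1 0 1 1, mk5 0 1 0 0 2, mk5 0 0 3 0 0, mk5 0 0 2 1 0, mk5 0 0 2 0 1, mk5 0 0 1 2 0, mk5 0 0 1 1 1, mk5 0 0 1 0 2, mk5 0 0 0 3 0, mk5 0 0 0 2 1, mk5 0 0 0 1 2, mk5 0 0 0 0 3}"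
      by (simp add: UNIV_ix)
    have "\<beta> 0 + \<beta> 1 + \<beta> 2 + \<beta> 3 + \<beta> 4 = 3" using b by (simp add: mons_def sum5)
    from tup5[OF this] show "\<beta> \<in> range alpha"
      apply (subst e)
      apply (simp only: insert_iff empty_iff prod.inject)
      apply (elim disjE conjE)
      by (simp_all only: r, simp_all)
  qed
qed

definition L43 :: "(nat \<Rightarrow> nat) list" where
  "L43 = [mk4 3 0 0 0, mk4 2 1 0 0, mk4 2 0 1 0, mk4 2 0 0 1, mk4 1 2 0 0, mk4 1 1 1 0, mk4 1 1 0 1, mk4 1 0 2 0, mk4 1 0 1 1, mk4 1 0 0 2, mk4 0 3 0 0, mk4 0 2 1 0, mk4 0 2 0 1, mk4 0 1 2 0, mk4 0 1 1 1, mk4 0 1 0 2, mk4 0 0 3 0, mk4 0 0 2 1, mk4 0 0 1 2, mk4 0 0 0 3]"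

lemma distinct_L43: "distinct L43" by (simp add: L43_def)

lemma mons4: "mons 4 3 = set L43"
proof
  show "set L43 \<subseteq> mons 4 3"
    by (auto simp: L43_def mons_def sum4 mk5_def)
  show "mons 4 3 \<subseteq> set L43"
  proof
    fix \<beta> assume b: "\<beta> \<in> mons 4 3"
    then have e: "\<beta> = mk4 (\<beta> 0) (\<beta> 1) (\<beta> 2) (\<beta> 3)"
      by (auto simp: mons_def mk5_def fun_eq_iff)
    have "\<beta> 0 + \<beta> 1 + \<beta> 2 + \<beta> 3 = 3" using b by (simp add: mons_def sum4)
    from tup4[OF this] show "\<beta> \<in> set L43"
      apply (subst e)
      apply (simp only: insert_iff empty_iff prod.inject)
      apply (elim disjE conjE)
      by (simp_all add: L43_def)
  qed
qed

lemma fe5_raw: "form_eval 5 3 c x = (\<Sum>m\<in>UNIV. c (alpha m) * mpow 5 (alpha m) x)"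
  unfolding form_eval_mpow mons5 by (simp add: sum.reindex[OF alpha_inj])

lemma fd5_raw: "form_deriv 5 3 c j x = (\<Sum>m\<in>UNIV. c (alpha m) * of_nat (alpha m j) *
        (\<Prod>i<5. if i = j then x i ^ (alpha m i - 1) else x i ^ alpha m i))"
  unfolding form_deriv_def mons5 by (simp add: sum.reindex[OF alpha_inj])

lemma fe4_raw: "form_eval 4 3 c x = (\<Sum>\<alpha>\<leftarrow>L43. c \<alpha> * mpow 4 \<alpha> x)"
  unfolding form_eval_mpow mons4 by (simp add: sum.distinct_set_conv_list[OF distinct_L43])

lemma fd4_raw: "form_deriv 4 3 c j x = (\<Sum>\<alpha>\<leftarrow>L43. c \<alpha> * of_nat (\<alpha> j) *
        (\<Prod>i<4. if i = j then x i ^ (\<alpha> i - 1) else x i ^ \<alpha> i))"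
  unfolding form_deriv_def mons4 by (simp add: sum.distinct_set_conv_list[OF distinct_L43])

lemma fe5: "form_eval 5 3 c x = c (mk5 3 0 0 0 0) * x 0 ^ 3 + c (mk5 2 1 0 0 0) * x 0 ^ 2 * x 1 + c (mk5 2 0 1 0 0) * x 0 ^ 2 * x 2 + c (mk5 2 0 0 1 0) * x 0 ^ 2 * x 3 + c (mk5 2 0 0 0 1) * x 0 ^ 2 * x 4 + c (mk5 1 2 0 0 0) * x 0 * x 1 ^ 2 + c (mk5 1 1 1 0 0) * x 0 * x 1 * x 2 + c (mk5 1 1 0 1 0) * x 0 * x 1 * x 3 + c (mk5 1 1 0 0 1) * x 0 * x 1 * x 4 + c (mk5 1 0 2 0 0) * x 0 * x 2 ^ 2 + c (mk5 1 0 1 1 0) * x 0 * x 2 * x 3 + c (mk5 1 0 1 0 1) * x 0 * x 2 * x 4 + c (mk5 1 0 0 2 0) * x 0 * x 3 ^ 2 + c (mk5 1 0 0 1 1) * x 0 * x 3 * x 4 + c (mk5 1 0 0 0 2) * x 0 * x 4 ^ 2 + c (mk5 0 3 0 0 0) * x 1 ^ 3 + c (mk5 0 2 1 0 0) * x 1 ^ 2 * x 2 + c (mk5 0 2 0 1 0) * x 1 ^ 2 * x 3 + c (mk5 0 2 0 0 1) * x 1 ^ 2 * x 4 + c (mk5 0 1 2 0 0) * x 1 * x 2 ^ 2 + c (mk5 0 1 1 1 0) * x 1 * x 2 * x 3 + c (mk5 0 1 1 0 1) * x 1 * x 2 * x 4 + c (mk5 0 1 0 2 0) * x 1 * x 3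 ^ 2 + c (mk5 0 1 0 1 1) * x 1 * x 3 * x 4 + c (mk5 0 1 0 0 2) * x 1 * x 4 ^ 2 + c (mk5 0 0 3 0 0) * x 2 ^ 3 + c (mk5 0 0 2 1 0) * x 2 ^ 2 * x 3 + c (mk5 0 0 2 0 1) * x 2 ^ 2 * x 4 + c (mk5 0 0 1 2 0) * x 2 * x 3 ^ 2 + c (mk5 0 0 1 1 1) * x 2 * x 3 * x 4 + c (mk5 0 0 1 0 2) * x 2 * x 4 ^ 2 + c (mk5 0 0 0 3 0) * x 3 ^ 3 + c (mk5 0 0 0 2 1) * x 3 ^ 2 * x 4 + c (mk5 0 0 0 1 2) * x 3 * x 4 ^ 2 + c (mk5 0 0 0 0 3) * x 4 ^ 3"
  unfolding fe5_raw UNIV_ix by (simp add: mpow_def prod5 algebra_simps)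

lemma fd5_0: "form_deriv 5 3 c 0 x = 3 * c (mk5 3 0 0 0 0) * x 0 ^ 2 + 2 * c (mk5 2 1 0 0 0) * x 0 * x 1 + 2 * c (mk5 2 0 1 0 0) * x 0 * x 2 + 2 * c (mk5 2 0 0 1 0) * x 0 * x 3 + 2 * c (mk5 2 0 0 0 1) * x 0 * x 4 + c (mk5 1 2 0 0 0) * x 1 ^ 2 + c (mk5 1 1 1 0 0) * x 1 * x 2 + c (mk5 1 1 0 1 0) * x 1 * x 3 + c (mk5 1 1 0 0 1) * x 1 * x 4 + c (mk5 1 0 2 0 0) * x 2 ^ 2 + c (mk5 1 0 1 1 0) * x 2 * x 3 + c (mk5 1 0 1 0 1) * x 2 * x 4 + c (mk5 1 0 0 2 0) * x 3 ^ 2 + c (mk5 1 0 0 1 1) * x 3 * x 4 + c (mk5 1 0 0 0 2) * x 4 ^ 2"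
  unfolding fd5_raw UNIV_ix by (simp add: prod5 algebra_simps)

lemma fd5_1: "form_deriv 5 3 c 1 x = c (mk5 2 1 0 0 0) * x 0 ^ 2 + 2 * c (mk5 1 2 0 0 0) * x 0 * x 1 + c (mk5 1 1 1 0 0) * x 0 * x 2 + c (mk5 1 1 0 1 0) * x 0 * x 3 + c (mk5 1 1 0 0 1) * x 0 * x 4 + 3 * c (mk5 0 3 0 0 0) * x 1 ^ 2 + 2 * c (mk5 0 2 1 0 0) * x 1 * x 2 + 2 * c (mk5 0 2 0 1 0) * x 1 * x 3 + 2 * c (mk5 0 2 0 0 1) * x 1 * x 4 + c (mk5 0 1 2 0 0) * x 2 ^ 2 + c (mk5 0 1 1 1 0) * x 2 * x 3 + c (mk5 0 1 1 0 1) * x 2 * x 4 + c (mk5 0 1 0 2 0) * x 3 ^ 2 + c (mk5 0 1 0 1 1) * x 3 * x 4 + c (mk5 0 1 0 0 2) * x 4 ^ 2"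
  unfolding fd5_raw UNIV_ix by (simp add: prod5 algebra_simps)

lemma fd5_2: "form_deriv 5 3 c 2 x = c (mk5 2 0 1 0 0) * x 0 ^ 2 + c (mk5 1 1 1 0 0) * x 0 * x 1 + 2 * c (mk5 1 0 2 0 0) * x 0 * x 2 + c (mk5 1 0 1 1 0) * x 0 * x 3 + c (mk5 1 0 1 0 1) * x 0 * x 4 + c (mk5 0 2 1 0 0) * x 1 ^ 2 + 2 * c (mk5 0 1 2 0 0) * x 1 * x 2 + c (mk5 0 1 1 1 0) * x 1 * x 3 + c (mk5 0 1 1 0 1) * x 1 * x 4 + 3 * c (mk5 0 0 3 0 0) * x 2 ^ 2 + 2 * c (mk5 0 0 2 1 0) * x 2 * x 3 + 2 * c (mk5 0 0 2 0 1) * x 2 * x 4 + c (mk5 0 0 1 2 0) * x 3 ^ 2 + c (mk5 0 0 1 1 1) * x 3 * x 4 + c (mk5 0 0 1 0 2) * x 4 ^ 2"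
  unfolding fd5_raw UNIV_ix by (simp add: prod5 algebra_simps)

lemma fd5_3: "form_deriv 5 3 c 3 x = c (mk5 2 0 0 1 0) * x 0 ^ 2 + c (mk5 1 1 0 1 0) * x 0 * x 1 + c (mk5 1 0 1 1 0) * x 0 * x 2 + 2 * c (mk5 1 0 0 2 0) * x 0 * x 3 + c (mk5 1 0 0 1 1) * x 0 * x 4 + c (mk5 0 2 0 1 0) * x 1 ^ 2 + c (mk5 0 1 1 1 0) * x 1 * x 2 + 2 * c (mk5 0 1 0 2 0) * x 1 * x 3 + c (mk5 0 1 0 1 1) * x 1 * x 4 + c (mk5 0 0 2 1 0) * x 2 ^ 2 + 2 * c (mk5 0 0 1 2 0) * x 2 * x 3 + c (mk5 0 0 1 1 1) * x 2 * x 4 + 3 * c (mk5 0 0 0 3 0) * x 3 ^ 2 + 2 * c (mk5 0 0 0 2 1) * x 3 * x 4 + c (mk5 0 0 0 1 2) * x 4 ^ 2"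
  unfolding fd5_raw UNIV_ix by (simp add: prod5 algebra_simps)

lemma fd5_4: "form_deriv 5 3 c 4 x = c (mk5 2 0 0 0 1) * x 0 ^ 2 + c (mk5 1 1 0 0 1) * x 0 * x 1 + c (mk5 1 0 1 0 1) * x 0 * x 2 + c (mk5 1 0 0 1 1) * x 0 * x 3 + 2 * c (mk5 1 0 0 0 2) * x 0 * x 4 + c (mk5 0 2 0 0 1) * x 1 ^ 2 + c (mk5 0 1 1 0 1) * x 1 * x 2 + c (mk5 0 1 0 1 1) * x 1 * x 3 + 2 * c (mk5 0 1 0 0 2) * x 1 * x 4 + c (mk5 0 0 2 0 1) * x 2 ^ 2 + c (mk5 0 0 1 1 1) * x 2 * x 3 + 2 * c (mk5 0 0 1 0 2) * x 2 * x 4 + c (mk5 0 0 0 2 1) * x 3 ^ 2 + 2 * c (mk5 0 0 0 1 2) * x 3 * x 4 + 3 * c (mk5 0 0 0 0 3) * x 4 ^ 2"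
  unfolding fd5_raw UNIV_ix by (simp add: prod5 algebra_simps)

lemma fe4: "form_eval 4 3 c x = c (mk4 3 0 0 0) * x 0 ^ 3 + c (mk4 2 1 0 0) * x 0 ^ 2 * x 1 + c (mk4 2 0 1 0) * x 0 ^ 2 * x 2 + c (mk4 2 0 0 1) * x 0 ^ 2 * x 3 + c (mk4 1 2 0 0) * x 0 * x 1 ^ 2 + c (mk4 1 1 1 0) * x 0 * x 1 * x 2 + c (mk4 1 1 0 1) * x 0 * x 1 * x 3 + c (mk4 1 0 2 0) * x 0 * x 2 ^ 2 + c (mk4 1 0 1 1) * x 0 * x 2 * x 3 + c (mk4 1 0 0 2) * x 0 * x 3 ^ 2 + c (mk4 0 3 0 0) * x 1 ^ 3 + c (mk4 0 2 1 0) * x 1 ^ 2 * x 2 + c (mk4 0 2 0 1) * x 1 ^ 2 * x 3 + c (mk4 0 1 2 0) * x 1 * x 2 ^ 2 + c (mk4 0 1 1 1) * x 1 * x 2 * x 3 + c (mk4 0 1 0 2) * x 1 * x 3 ^ 2 + c (mk4 0 0 3 0) * x 2 ^ 3 + c (mk4 0 0 2 1) * x 2 ^ 2 * x 3 + c (mk4 0 0 1 2) * x 2 * x 3 ^ 2 + c (mk4 0 0 0 3) * x 3 ^ 3"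
  unfolding fe4_raw by (simp add: L43_def mpow_def prod4 algebra_simps)

lemma fd4_0: "form_deriv 4 3 c 0 x = 3 * c (mk4 3 0 0 0) * x 0 ^ 2 + 2 * c (mk4 2 1 0 0) * x 0 * x 1 + 2 * c (mk4 2 0 1 0) * x 0 * x 2 + 2 * c (mk4 2 0 0 1) * x 0 * x 3 + c (mk4 1 2 0 0) * x 1 ^ 2 + c (mk4 1 1 1 0) * x 1 * x 2 + c (mk4 1 1 0 1) * x 1 * x 3 + c (mk4 1 0 2 0) * x 2 ^ 2 + c (mk4 1 0 1 1) * x 2 * x 3 + c (mk4 1 0 0 2) * x 3 ^ 2"
  unfolding fd4_raw by (simp add: L43_def prod4 algebra_simps)

lemma fd4_1: "form_deriv 4 3 c 1 x = c (mk4 2 1 0 0) * x 0 ^ 2 + 2 * c (mk4 1 2 0 0) * x 0 * x 1 + c (mk4 1 1 1 0) * x 0 * x 2 + c (mk4 1 1 0 1) * x 0 * x 3 + 3 * c (mk4 0 3 0 0) * x 1 ^ 2 + 2 * c (mk4 0 2 1 0) * x 1 * x 2 + 2 * c (mk4 0 2 0 1) * x 1 * x 3 + c (mk4 0 1 2 0) * x 2 ^ 2 + c (mk4 0 1 1 1) * x 2 * x 3 + c (mk4 0 1 0 2) * x 3 ^ 2"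
  unfolding fd4_raw by (simp add: L43_def prod4 algebra_simps)

lemma fd4_2: "form_deriv 4 3 c 2 x = c (mk4 2 0 1 0) * x 0 ^ 2 + c (mk4 1 1 1 0) * x 0 * x 1 + 2 * c (mk4 1 0 2 0) * x 0 * x 2 + c (mk4 1 0 1 1) * x 0 * x 3 + c (mk4 0 2 1 0) * x 1 ^ 2 + 2 * c (mk4 0 1 2 0) * x 1 * x 2 + c (mk4 0 1 1 1) * x 1 * x 3 + 3 * c (mk4 0 0 3 0) * x 2 ^ 2 + 2 * c (mk4 0 0 2 1) * x 2 * x 3 + c (mk4 0 0 1 2) * x 3 ^ 2"
  unfolding fd4_raw by (simp add: L43_def prod4 algebra_simps)

lemma fd4_3: "form_deriv 4 3 c 3 x = c (mk4 2 0 0 1) * x 0 ^ 2 + c (mk4 1 1 0 1) * x 0 * x 1 + c (mk4 1 0 1 1) * x 0 * x 2 + 2 * c (mk4 1 0 0 2) * x 0 * x 3 + c (mk4 0 2 0 1) * x 1 ^ 2 + c (mk4 0 1 1 1) * x 1 * x 2 + 2 * c (mk4 0 1 0 2) * x 1 * x 3 + c (mk4 0 0 2 1) * x 2 ^ 2 + 2 * c (mk4 0 0 1 2) * x 2 * x 3 + 3 * c (mk4 0 0 0 3) * x 3 ^ 2"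
  unfolding fd4_raw by (simp add: L43_def prod4 algebra_simps)

lemma range_alpha: "range alpha = {mk5 3 0 0 0 0, mk5 2 1 0 0 0, mk5 2 0 1 0 0, mk5 2 0 0 1 0, mk5 2 0 0 0 1, mk5 1 2 0 0 0, mk5 1 1 1 0 0, mk5 1 1 0 1 0, mk5 1 1 0 0 1, mk5 1 0 2 0 0, mk5 1 0 1 1 0, mk5 1 0 1 0 1, mk5 1 0 0 2 0, mk5 1 0 0 1 1, mk5 1 0 0 0 2, mk5 0 3 0 0 0, mk5 0 2 1 0 0, mk5 0 2 0 1 0, mk5 0 2 0 0 1, mk5 0 1 2 0 0, mk5 0 1 1 1 0, mk5 0 1 1 0 1, mk5 0 1 0 2 0, mk5 0 1 0 1 1, mk5 0 1 0 0 2, mk5 0 0 3 0 0, mk5 0 0 2 1 0, mk5 0 0 2 0 1, mk5 0 0 1 2 0, mk5 0 0 1 1 1, mk5 0 0 1 0 2, mk5 0 0 0 3 0, mk5 0 0 0 2 1, mk5 0 0 0 1 2, mk5 0 0 0 0 3}"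
  by (simp add: UNIV_ix)

definition F0c :: "(nat \<Rightarrow> nat) \<Rightarrow> complex" where
  "F0c = (\<lambda>\<alpha>. if \<alpha> = mk4 3 0 0 0 then 1 else if \<alpha> = mk4 1 2 0 0 then - 1 else if \<alpha> = mk4 1 0 2 0 then - 1 else if \<alpha> = mk4 0 1 2 0 then 1 else if \<alpha> = mk4 0 1 0 2 then 1 else if \<alpha> = mk4 0 0 1 2 then 1 else if \<alpha> = mk4 0 0 0 3 then 1 else 0)"

definition W0c :: "(nat \<Rightarrow> nat) \<Rightarrow> complex" where
  "W0c = (\<lambda>\<alpha>. if \<alpha> = mk5 3 0 0 0 0 then 1 else if \<alpha> = mk5 1 2 0 0 0 then - 1 else if \<alpha> = mk5 1 0 2 0 0 then - 1 else if \<alpha> = mk5 1 0 0 1 1 then - 1 else if \<alpha> = mk5 1 0 0 0 2 then - 1 else if \<alpha> = mk5 0 1 2 0 0 then 1 else if \<alpha> = mk5 0 1 1 0 1 then 1 else if \<alpha> = mk5 0 1 0 2 0 then 1 else if \<alpha> = mk5 0 0 1 2 0 then 1 else if \<alpha> = mk5 0 0 0 3 0 then 1 else 0)"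

lemma F0c_forms: "F0c \<in> forms 4 3"
  unfolding forms_def mons4 F0c_def by (auto simp: L43_def)

lemma W0c_forms: "W0c \<in> forms 5 3"
  unfolding forms_def mons5 range_alpha W0c_def by auto

lemma F0_eval: "form_eval 4 3 F0c x = x 0 ^ 3 - x 0 * x 1 ^ 2 - x 0 * x 2 ^ 2 + x 1 * x 2 ^ 2 + x 1 * x 3 ^ 2 + x 2 * x 3 ^ 2 + x 3 ^ 3"
  unfolding fe4 F0c_def by (simp add: algebra_simps)

lemma F0_d0: "form_deriv 4 3 F0c 0 x = 3 * x 0 ^ 2 - x 1 ^ 2 - x 2 ^ 2"
  unfolding fd4_0 F0c_def by (simp add: algebra_simps)

lemma F0_d1: "form_deriv 4 3 F0c 1 x = - 2 * x 0 * x 1 + x 2 ^ 2 + x 3 ^ 2"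
  unfolding fd4_1 F0c_def by (simp add: algebra_simps)

lemma F0_d2: "form_deriv 4 3 F0c 2 x = - 2 * x 0 * x 2 + 2 * x 1 * x 2 + x 3 ^ 2"
  unfolding fd4_2 F0c_def by (simp add: algebra_simps)

lemma F0_d3: "form_deriv 4 3 F0c 3 x = 2 * x 1 * x 3 + 2 * x 2 * x 3 + 3 * x 3 ^ 2"
  unfolding fd4_3 F0c_def by (simp add: algebra_simps)

lemma W0_d0: "form_deriv 5 3 W0c 0 x = 3 * x 0 ^ 2 - x 1 ^ 2 - x 2 ^ 2 - x 3 * x 4 - x 4 ^ 2"
  unfolding fd5_0 W0c_def by (simp add: algebra_simps)

lemma W0_d1: "form_deriv 5 3 W0c 1 x = - 2 * x 0 * x 1 + x 2 ^ 2 + x 2 * x 4 + x 3 ^ 2"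
  unfolding fd5_1 W0c_def by (simp add: algebra_simps)

lemma W0_d2: "form_deriv 5 3 W0c 2 x = - 2 * x 0 * x 2 + 2 * x 1 * x 2 + x 1 * x 4 + x 3 ^ 2"
  unfolding fd5_2 W0c_def by (simp add: algebra_simps)

lemma W0_d3: "form_deriv 5 3 W0c 3 x = - x 0 * x 4 + 2 * x 1 * x 3 + 2 * x 2 * x 3 + 3 * x 3 ^ 2"
  unfolding fd5_3 W0c_def by (simp add: algebra_simps)

lemma W0_d4: "form_deriv 5 3 W0c 4 x = - x 0 * x 3 - 2 * x 0 * x 4 + x 1 * x 2"
  unfolding fd5_4 W0c_def by (simp add: algebra_simps)

lemma W0_eval: "form_eval 5 3 W0c x = x 0 ^ 3 - x 0 * x 1 ^ 2 - x 0 * x 2 ^ 2 - x 0 * x 3 * x 4 - x 0 * x 4 ^ 2 + x 1 * x 2 ^ 2 + x 1 * x 2 * x 4 + x 1 * x 3 ^ 2 + x 2 * x 3 ^ 2 + x 3 ^ 3"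
  unfolding fe5 W0c_def by (simp add: algebra_simps)

lemma Wform_F0: "Wform F0c 1 x = form_eval 5 3 W0c x"
  unfolding Wform_def qQ_def F0_eval W0_eval by (simp add: algebra_simps power2_eq_square)

lemma W0_cert0:
  fixes x :: "nat \<Rightarrow> complex"
  assumes "3 * x 0 ^ 2 - x 1 ^ 2 - x 2 ^ 2 - x 3 * x 4 - x 4 ^ 2 = 0"
    and "- 2 * x 0 * x 1 + x 2 ^ 2 + x 2 * x 4 + x 3 ^ 2 = 0"
    and "- 2 * x 0 * x 2 + 2 * x 1 * x 2 + x 1 * x 4 + x 3 ^ 2 = 0"
    and "- x 0 * x 4 + 2 * x 1 * x 3 + 2 * x 2 * x 3 + 3 * x 3 ^ 2 = 0"
    and "- x 0 * x 3 - 2 * x 0 * x 4 + x 1 * x 2 = 0"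
  shows "x 0 ^ 6 = 0"
  using assms by algebra

lemma W0_cert1:
  fixes x :: "nat \<Rightarrow> complex"
  assumes "3 * x 0 ^ 2 - x 1 ^ 2 - x 2 ^ 2 - x 3 * x 4 - x 4 ^ 2 = 0"
    and "- 2 * x 0 * x 1 + x 2 ^ 2 + x 2 * x 4 + x 3 ^ 2 = 0"
    and "- 2 * x 0 * x 2 + 2 * x 1 * x 2 + x 1 * x 4 + x 3 ^ 2 = 0"
    and "- x 0 * x 4 + 2 * x 1 * x 3 + 2 * x 2 * x 3 + 3 * x 3 ^ 2 = 0"
    and "- x 0 * x 3 - 2 * x 0 * x 4 + x 1 * x 2 = 0"
  shows "x 1 ^ 6 = 0"
  using assms by algebra

lemma W0_cert2:
  fixes x :: "nat \<Rightarrow> complex"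
  assumes "3 * x 0 ^ 2 - x 1 ^ 2 - x 2 ^ 2 - x 3 * x 4 - x 4 ^ 2 = 0"
    and "- 2 * x 0 * x 1 + x 2 ^ 2 + x 2 * x 4 + x 3 ^ 2 = 0"
    and "- 2 * x 0 * x 2 + 2 * x 1 * x 2 + x 1 * x 4 + x 3 ^ 2 = 0"
    and "- x 0 * x 4 + 2 * x 1 * x 3 + 2 * x 2 * x 3 + 3 * x 3 ^ 2 = 0"
    and "- x 0 * x 3 - 2 * x 0 * x 4 + x 1 * x 2 = 0"
  shows "x 2 ^ 6 = 0"
  using assms by algebra

lemma W0_cert3:
  fixes x :: "nat \<Rightarrow> complex"
  assumes "3 * x 0 ^ 2 - x 1 ^ 2 - x 2 ^ 2 - x 3 * x 4 - x 4 ^ 2 = 0"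
    and "- 2 * x 0 * x 1 + x 2 ^ 2 + x 2 * x 4 + x 3 ^ 2 = 0"
    and "- 2 * x 0 * x 2 + 2 * x 1 * x 2 + x 1 * x 4 + x 3 ^ 2 = 0"
    and "- x 0 * x 4 + 2 * x 1 * x 3 + 2 * x 2 * x 3 + 3 * x 3 ^ 2 = 0"
    and "- x 0 * x 3 - 2 * x 0 * x 4 + x 1 * x 2 = 0"
  shows "x 3 ^ 6 = 0"
  using assms by algebra

lemma W0_cert4:
  fixes x :: "nat \<Rightarrow> complex"
  assumes "3 * x 0 ^ 2 - x 1 ^ 2 - x 2 ^ 2 - x 3 * x 4 - x 4 ^ 2 = 0"
    and "- 2 * x 0 * x 1 + x 2 ^ 2 + x 2 * x 4 + x 3 ^ 2 = 0"
    and "- 2 * x 0 * x 2 + 2 * x 1 * x 2 + x 1 * x 4 + x 3 ^ 2 = 0"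
    and "- x 0 * x 4 + 2 * x 1 * x 3 + 2 * x 2 * x 3 + 3 * x 3 ^ 2 = 0"
    and "- x 0 * x 3 - 2 * x 0 * x 4 + x 1 * x 2 = 0"
  shows "x 4 ^ 6 = 0"
  using assms by algebra

lemma nonzero_vec5: "nonzero_vec 5 x \<longleftrightarrow> x 0 \<noteq> 0 \<or> x 1 \<noteq> 0 \<or> x 2 \<noteq> 0 \<or> x 3 \<noteq> 0 \<or> x 4 \<noteq> 0"
  unfolding nonzero_vec_def
  by (auto simp: less_Suc_eq eval_nat_numeral)

lemma nonzero_vec4: "nonzero_vec 4 x \<longleftrightarrow> x 0 \<noteq> 0 \<or> x 1 \<noteq> 0 \<or> x 2 \<noteq> 0 \<or> x 3 \<noteq> 0"
  unfolding nonzero_vec_def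
  by (auto simp: less_Suc_eq eval_nat_numeral)

lemma smooth_W0: "smooth_form 5 3 W0c"
  unfolding smooth_form_def
proof (intro conjI W0c_forms allI impI notI)
  fix x :: "nat \<Rightarrow> complex"
  assume nz: "nonzero_vec 5 x" and d: "\<forall>j<5. form_deriv 5 3 W0c j x = 0"
  have h: "form_deriv 5 3 W0c 0 x = 0" "form_deriv 5 3 W0c 1 x = 0" "form_deriv 5 3 W0c 2 x = 0"
     "form_deriv 5 3 W0c 3 x = 0" "form_deriv 5 3 W0c 4 x = 0" using d by auto
  note h' = h[unfolded W0_d0 W0_d1 W0_d2 W0_d3 W0_d4]
  have "x 0 = 0" using W0_cert0[OF h'] by simp
  moreover have "x 1 = 0" using W0_cert1[OF h'] by simp
  moreover have "x 2 = 0" using W0_cert2[OF h'] by simp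
  moreover have "x 3 = 0" using W0_cert3[OF h'] by simp
  moreover have "x 4 = 0" using W0_cert4[OF h'] by simp
  ultimately show False using nz by (simp add: nonzero_vec5)
qed

lemma F0_cert0:
  fixes x :: "nat \<Rightarrow> complex" and mu :: complex
  assumes "x 0 ^ 3 - x 0 * x 1 ^ 2 - x 0 * x 2 ^ 2 + x 1 * x 2 ^ 2 + x 1 * x 3 ^ 2 + x 2 * x 3 ^ 2 + x 3 ^ 3 = 0"
    and "x 0 * x 3 - x 1 * x 2 = 0"
    and "3 * x 0 ^ 2 - x 1 ^ 2 - x 2 ^ 2 + mu * (x 3) = 0"
    and "- 2 * x 0 * x 1 + x 2 ^ 2 + x 3 ^ 2 + mu * (- x 2) = 0"
    and "- 2 * x 0 * x 2 + 2 * x 1 * x 2 + x 3 ^ 2 + mu * (- x 1) = 0"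
    and "2 * x 1 * x 3 + 2 * x 2 * x 3 + 3 * x 3 ^ 2 + mu * (x 0) = 0"
  shows "x 0 ^ 5 = 0"
  using assms by algebra

lemma F0_cert1:
  fixes x :: "nat \<Rightarrow> complex" and mu :: complex
  assumes "x 0 ^ 3 - x 0 * x 1 ^ 2 - x 0 * x 2 ^ 2 + x 1 * x 2 ^ 2 + x 1 * x 3 ^ 2 + x 2 * x 3 ^ 2 + x 3 ^ 3 = 0"
    and "x 0 * x 3 - x 1 * x 2 = 0"
    and "3 * x 0 ^ 2 - x 1 ^ 2 - x 2 ^ 2 + mu * (x 3) = 0"
    and "- 2 * x 0 * x 1 + x 2 ^ 2 + x 3 ^ 2 + mu * (- x 2) = 0"
    and "- 2 * x 0 * x 2 + 2 * x 1 * x 2 + x 3 ^ 2 + mu * (- x 1) = 0"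
    and "2 * x 1 * x 3 + 2 * x 2 * x 3 + 3 * x 3 ^ 2 + mu * (x 0) = 0"
  shows "x 1 ^ 5 = 0"
  using assms by algebra

lemma F0_cert2:
  fixes x :: "nat \<Rightarrow> complex" and mu :: complex
  assumes "x 0 ^ 3 - x 0 * x 1 ^ 2 - x 0 * x 2 ^ 2 + x 1 * x 2 ^ 2 + x 1 * x 3 ^ 2 + x 2 * x 3 ^ 2 + x 3 ^ 3 = 0"
    and "x 0 * x 3 - x 1 * x 2 = 0"
    and "3 * x 0 ^ 2 - x 1 ^ 2 - x 2 ^ 2 + mu * (x 3) = 0"
    and "- 2 * x 0 * x 1 + x 2 ^ 2 + x 3 ^ 2 + mu * (- x 2) = 0"
    and "- 2 * x 0 * x 2 + 2 * x 1 * x 2 + x 3 ^ 2 + mu * (- x 1) = 0"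
    and "2 * x 1 * x 3 + 2 * x 2 * x 3 + 3 * x 3 ^ 2 + mu * (x 0) = 0"
  shows "x 2 ^ 5 = 0"
  using assms by algebra

lemma F0_cert3:
  fixes x :: "nat \<Rightarrow> complex" and mu :: complex
  assumes "x 0 ^ 3 - x 0 * x 1 ^ 2 - x 0 * x 2 ^ 2 + x 1 * x 2 ^ 2 + x 1 * x 3 ^ 2 + x 2 * x 3 ^ 2 + x 3 ^ 3 = 0"
    and "x 0 * x 3 - x 1 * x 2 = 0"
    and "3 * x 0 ^ 2 - x 1 ^ 2 - x 2 ^ 2 + mu * (x 3) = 0"
    and "- 2 * x 0 * x 1 + x 2 ^ 2 + x 3 ^ 2 + mu * (- x 2) = 0"
    and "- 2 * x 0 * x 2 + 2 * x 1 * x 2 + x 3 ^ 2 + mu * (- x 1) = 0"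
    and "2 * x 1 * x 3 + 2 * x 2 * x 3 + 3 * x 3 ^ 2 + mu * (x 0) = 0"
  shows "x 3 ^ 5 = 0"
  using assms by algebra

lemma qgrad_simps: "qgrad x 0 = x 3" "qgrad x 1 = - x 2" "qgrad x 2 = - x 1" "qgrad x 3 = x 0"
  by (simp_all add: qgrad_def)

lemma smooth_F0: "smooth_curve_on_Q F0c"
  unfolding smooth_curve_on_Q_def
proof (intro allI impI notI)
  fix x :: "nat \<Rightarrow> complex"
  assume a: "nonzero_vec 4 x \<and> form_eval 4 3 F0c x = 0 \<and> qQ x = 0"
    and b: "\<exists>l m. (l, m) \<noteq> (0, 0) \<and> (\<forall>j<4. l * form_deriv 4 3 F0c j x + m * qgrad x j = 0)"
  then obtain l m where lm: "(l, m) \<noteq> (0, 0)" and e: "\<forall>j<4. l * form_deriv 4 3 F0c j x + m * qgrad x j = 0"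
    by blast
  have e4: "l * form_deriv 4 3 F0c 0 x + m * qgrad x 0 = 0" "l * form_deriv 4 3 F0c 1 x + m * qgrad x 1 = 0"
    "l * form_deriv 4 3 F0c 2 x + m * qgrad x 2 = 0" "l * form_deriv 4 3 F0c 3 x + m * qgrad x 3 = 0"
    using e by auto
  have nz: "x 0 \<noteq> 0 \<or> x 1 \<noteq> 0 \<or> x 2 \<noteq> 0 \<or> x 3 \<noteq> 0" using a by (simp add: nonzero_vec4)
  show False
  proof (cases "l = 0")
    case True
    then have "m \<noteq> 0" using lm by simp
    then show False using e4 nz True by (simp add: qgrad_def)
  next
    case False
    define mu where "mu = m / l"
    have e5: "form_deriv 4 3 F0c j x + mu * qgrad x j = 0" if "l * form_deriv 4 3 F0c j x + m * qgrad x j = 0" for j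
    proof -
      have "l * (form_deriv 4 3 F0c j x + mu * qgrad x j) = 0" using that False by (simp add: mu_def algebra_simps)
      then show ?thesis using False by simp
    qed
    have f: "form_eval 4 3 F0c x = 0" "qQ x = 0" using a by auto
    note hs = f[unfolded F0_eval qQ_def] e5[OF e4(1), unfolded F0_d0 qgrad_simps] e5[OF e4(2), unfolded F0_d1 qgrad_simps]
      e5[OF e4(3), unfolded F0_d2 qgrad_simps] e5[OF e4(4), unfolded F0_d3 qgrad_simps]
    have "x 0 = 0" using F0_cert0[OF hs] by simp
    moreover have "x 1 = 0" using F0_cert1[OF hs] by simp
    moreover have "x 2 = 0" using F0_cert2[OF hs] by simp
    moreover have "x 3 = 0" using F0_cert3[OF hs] by simp
    ultimately show False using nz by simp
  qed
qed

definition ind :: "bool \<Rightarrow> complex" where "ind b = (if b then 1 else 0)"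

definition Fu :: "complex ^ ix \<Rightarrow> (nat \<Rightarrow> nat) \<Rightarrow> complex" where
  "Fu u = (\<lambda>\<alpha>. F0c \<alpha> + (u $ X1 * ind (\<alpha> = mk4 3 0 0 0) + u $ X2 * ind (\<alpha> = mk4 2 1 0 0) + u $ X3 * ind (\<alpha> = mk4 2 0 1 0) + u $ X4 * ind (\<alpha> = mk4 2 0 0 1) + u $ X5 * ind (\<alpha> = mk4 1 2 0 0) + u $ X6 * ind (\<alpha> = mk4 1 1 1 0) + u $ X7 * ind (\<alpha> = mk4 1 1 0 1) + u $ X8 * ind (\<alpha> = mk4 1 0 2 0) + u $ X9 * ind (\<alpha> = mk4 1 0 1 1) + u $ X10 * ind (\<alpha> = mk4 1 0 0 2) + u $ X11 * ind (\<alpha> = mk4 0 2 1 0) + u $ X12 * ind (\<alpha> = mk4 0 1 2 0) + u $ X13 * ind (\<alpha> = mk4 0 1 1 1)))"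

definition tu :: "complex ^ ix \<Rightarrow> complex" where "tu u = 1 + u $ X0"

definition ep :: "nat \<Rightarrow> nat \<Rightarrow> ix" where
  "ep i j = (if i = 0 \<and> j = 0 then X14 else if i = 0 \<and> j = 1 then X15 else if i = 0 \<and> j = 2 then X16 else if i = 0 \<and> j = 3 then X17 else if i = 0 \<and> j = 4 then X18 else if i = 1 \<and> j = 0 then X19 else if i = 1 \<and> j = 1 then X20 else if i = 1 \<and> j = 2 then X21 else if i = 1 \<and> j = 3 then X22 else if i = 1 \<and> j = 4 then X23 else if i = 2 \<and> j = 0 then X24 else if i = 2 \<and> j = 1 then X25 else if i = 2 \<and> j = 2 then X26 else if i = 2 \<and> j = 3 then X27 else if i = 2 \<and> j = 4 then X28 else if i = 3 \<and> j = 0 then X29 else if i = 3 \<and> j = 1 then X30 else if i = 3 \<and> j = 2 then X31 else if i = 3 \<and> j = 3 then X32 else if i = 3 \<and> j = 4 then X33 else if i = 4 \<and> j = 4 then X34 else X0)"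

definition Nu :: "complex ^ ix \<Rightarrow> nat \<Rightarrow> nat \<Rightarrow> complex" where "Nu u i j = u $ ep i j"

definition SD :: "(nat \<times> nat) set" where "SD = {(i, j). i = j}"
definition S1 :: "(nat \<times> nat) set" where "S1 = {0, 1} \<times> {2, 3, 4}"
definition S2 :: "(nat \<times> nat) set" where "S2 = {2, 3} \<times> {0, 1, 4}"
definition S3 :: "(nat \<times> nat) set" where "S3 = {(0, 1), (2, 3)}"
definition S4 :: "(nat \<times> nat) set" where "S4 = {(1, 0), (3, 2)}"

definition Au :: "complex ^ ix \<Rightarrow> nat \<Rightarrow> nat \<Rightarrow> complex" where
  "Au u = mm 5 (lay SD (Nu u)) (mm 5 (lay S1 (Nu u)) (mm 5 (lay S2 (Nu u)) (mm 5 (lay S3 (Nu u)) (lay S4 (Nu u)))))"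

definition Phi :: "complex ^ ix \<Rightarrow> (nat \<Rightarrow> complex) \<Rightarrow> complex" where
  "Phi u x = Wform (Fu u) (tu u) (matvec 5 (Au u) x)"

lemma isform_matvec: "i < 5 \<Longrightarrow> isform 5 1 (\<lambda>x. matvec 5 A x i)"
  unfolding matvec_def
  by (intro isform_sum isform_scale isform_var) auto

lemma isform_Wform:
  assumes F: "F \<in> forms 4 3"
  shows "isform 5 3 (\<lambda>x. Wform F t (matvec 5 A x))"
proof -
  let ?y = "\<lambda>x. matvec 5 A x"
  have y: "isform 5 1 (\<lambda>x. ?y x i)" if "i < 5" for i using isform_matvec[OF that] .
  have fe: "isform 5 3 (\<lambda>x. form_eval 4 3 F (?y x))"
    unfolding form_eval_def
  proof (intro isform_sum isform_scale)
    fix \<beta> assume b: "\<beta> \<in> mons 4 3"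
    have "isform 5 (\<Sum>i<4. \<beta> i * 1) (\<lambda>x. \<Prod>i<4. ?y x i ^ \<beta> i)"
      by (intro isform_prod isform_pow y) auto
    moreover have "(\<Sum>i<4. \<beta> i * 1) = 3" using b by (simp add: mons_def)
    ultimately show "isform 5 3 (\<lambda>x. \<Prod>i<4. ?y x i ^ \<beta> i)" by simp
  qed simp
  have q: "isform 5 2 (\<lambda>x. qQ (?y x))"
  proof -
    have a: "isform 5 (1 + 1) (\<lambda>x. ?y x 0 * ?y x 3)" by (intro isform_mult y) auto
    have b: "isform 5 (1 + 1) (\<lambda>x. ?y x 1 * ?y x 2)" by (intro isform_mult y) auto
    have a': "isform 5 2 (\<lambda>x. ?y x 0 * ?y x 3)" using a by (simp only: one_add_one)
    have b': "isform 5 2 (\<lambda>x. ?y x 1 * ?y x 2)" using b by (simp only: one_add_one)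
    from a' b' have "isform 5 2 (\<lambda>x. ?y x 0 * ?y x 3 + (-1) * (?y x 1 * ?y x 2))"
      by (intro isform_add isform_scale) auto
    then show ?thesis by (rule isform_cong) (simp add: qQ_def)
  qed
  have t1': "isform 5 (1 + 2) (\<lambda>x. ?y x 4 * qQ (?y x))" by (intro isform_mult y q) auto
  have t2': "isform 5 (1 + 2 * 1) (\<lambda>x. ?y x 0 * (?y x 4) ^ 2)" by (intro isform_mult isform_pow y) auto
  have t1: "isform 5 3 (\<lambda>x. ?y x 4 * qQ (?y x))" using t1' by (simp only: one_plus_numeral semiring_norm)
  have t2: "isform 5 3 (\<lambda>x. ?y x 0 * (?y x 4) ^ 2)" using t2' by (simp only: one_plus_numeral semiring_norm mult_1_right)
  have "isform 5 3 (\<lambda>x. form_eval 4 3 F (?y x) + (-1) * (?y x 4 * qQ (?y x)) + (- t) * (?y x 0 * (?y x 4) ^ 2))"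
    using fe t1 t2 by (intro isform_add isform_scale) auto
  then show ?thesis by (rule isform_cong) (simp add: Wform_def algebra_simps)
qed

lemma Fu_forms: "Fu u \<in> forms 4 3"
  using F0c_forms unfolding forms_def Fu_def mons4 by (auto simp: L43_def ind_def)

lemma Phi_isform: "isform 5 3 (Phi u)"
  unfolding Phi_def[abs_def] by (rule isform_Wform[OF Fu_forms])

lemma Au_invertible:
  assumes "\<And>i. i < 5 \<Longrightarrow> 1 + u $ ep i i \<noteq> 0"
  shows "invertible_mat 5 (Au u)"
  unfolding Au_def
proof (intro invertible_mat_mm)
  show "invertible_mat 5 (lay SD (Nu u))"
    by (rule invertible_lay_diag) (auto simp: SD_def Nu_def assms)
  show "invertible_mat 5 (lay S1 (Nu u))" by (rule invertible_lay_sqz) (auto simp: S1_def)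
  show "invertible_mat 5 (lay S2 (Nu u))" by (rule invertible_lay_sqz) (auto simp: S2_def)
  show "invertible_mat 5 (lay S3 (Nu u))" by (rule invertible_lay_sqz) (auto simp: S3_def)
  show "invertible_mat 5 (lay S4 (Nu u))" by (rule invertible_lay_sqz) (auto simp: S4_def)
qed


lemma Fu_eval: "form_eval 4 3 (Fu u) x = (1 + u $ X1) * x 0 ^ 3 + (0 + u $ X2) * x 0 ^ 2 * x 1 + (0 + u $ X3) * x 0 ^ 2 * x 2 + (0 + u $ X4) * x 0 ^ 2 * x 3 + (- 1 + u $ X5) * x 0 * x 1 ^ 2 + (0 + u $ X6) * x 0 * x 1 * x 2 + (0 + u $ X7) * x 0 * x 1 * x 3 + (- 1 + u $ X8) * x 0 * x 2 ^ 2 + (0 + u $ X9) * x 0 * x 2 * x 3 + (0 + u $ X10) * x 0 * x 3 ^ 2 + (0) * x 1 ^ 3 + (0 + u $ X11) * x 1 ^ 2 * x 2 + (0) * x 1 ^ 2 * x 3 + (1 + u $ X12) * x 1 * x 2 ^ 2 + (0 + u $ X13) * x 1 * x 2 * x 3 + (1) * x 1 * x 3 ^ 2 + (0) * x 2 ^ 3 + (0) * x 2 ^ 2 * x 3 + (1) * x 2 * x 3 ^ 2 + (1) * x 3 ^ 3"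
  unfolding fe4 Fu_def F0c_def by (simp add: ind_def)

lemma Fu_U0:
  assumes "smooth_curve_on_Q (Fu u)"
  shows "Fu u \<in> U0"
  unfolding U0_def
proof (intro CollectI conjI Fu_forms assms)
  show "form_eval 4 3 (Fu u) (\<lambda>i. if i = 3 then 1 else 0) \<noteq> 0" by (simp add: Fu_eval)
  show "tangent2 (Fu u) line1" unfolding tangent2_def
    by (rule exI[of _ 0], rule exI[of _ 1], rule exI[of _ 1], rule exI[of _ 1])
       (simp add: Fu_eval line1_def power2_eq_square power3_eq_cube algebra_simps)
  show "tangent2 (Fu u) line2" unfolding tangent2_def
    by (rule exI[of _ 0], rule exI[of _ 1], rule exI[of _ 1], rule exI[of _ 1])
       (simp add: Fu_eval line2_def power2_eq_square power3_eq_cube algebra_simps)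
qed

primrec Bf :: "ix \<Rightarrow> (nat \<Rightarrow> complex) \<Rightarrow> complex" where
  "Bf X0 x = - (x 0 * x 4 ^ 2)"
| "Bf X1 x = x 0 ^ 3"
| "Bf X2 x = x 0 ^ 2 * x 1"
| "Bf X3 x = x 0 ^ 2 * x 2"
| "Bf X4 x = x 0 ^ 2 * x 3"
| "Bf X5 x = x 0 * x 1 ^ 2"
| "Bf X6 x = x 0 * x 1 * x 2"
| "Bf X7 x = x 0 * x 1 * x 3"
| "Bf X8 x = x 0 * x 2 ^ 2"
| "Bf X9 x = x 0 * x 2 * x 3"
| "Bf X10 x = x 0 * x 3 ^ 2"
| "Bf X11 x = x 1 ^ 2 * x 2"
| "Bf X12 x = x 1 * x 2 ^ 2"
| "Bf X13 x = x 1 * x 2 * x 3"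
| "Bf X14 x = x 0 * (3 * x 0 ^ 2 - x 1 ^ 2 - x 2 ^ 2 - x 3 * x 4 - x 4 ^ 2)"
| "Bf X15 x = x 1 * (3 * x 0 ^ 2 - x 1 ^ 2 - x 2 ^ 2 - x 3 * x 4 - x 4 ^ 2)"
| "Bf X16 x = x 2 * (3 * x 0 ^ 2 - x 1 ^ 2 - x 2 ^ 2 - x 3 * x 4 - x 4 ^ 2)"
| "Bf X17 x = x 3 * (3 * x 0 ^ 2 - x 1 ^ 2 - x 2 ^ 2 - x 3 * x 4 - x 4 ^ 2)"
| "Bf X18 x = x 4 * (3 * x 0 ^ 2 - x 1 ^ 2 - x 2 ^ 2 - x 3 * x 4 - x 4 ^ 2)"
| "Bf X19 x = x 0 * (- 2 * x 0 * x 1 + x 2 ^ 2 + x 2 * x 4 + x 3 ^ 2)"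
| "Bf X20 x = x 1 * (- 2 * x 0 * x 1 + x 2 ^ 2 + x 2 * x 4 + x 3 ^ 2)"
| "Bf X21 x = x 2 * (- 2 * x 0 * x 1 + x 2 ^ 2 + x 2 * x 4 + x 3 ^ 2)"
| "Bf X22 x = x 3 * (- 2 * x 0 * x 1 + x 2 ^ 2 + x 2 * x 4 + x 3 ^ 2)"
| "Bf X23 x = x 4 * (- 2 * x 0 * x 1 + x 2 ^ 2 + x 2 * x 4 + x 3 ^ 2)"
| "Bf X24 x = x 0 * (- 2 * x 0 * x 2 + 2 * x 1 * x 2 + x 1 * x 4 + x 3 ^ 2)"
| "Bf X25 x = x 1 * (- 2 * x 0 * x 2 + 2 * x 1 * x 2 + x 1 * x 4 + x 3 ^ 2)"
| "Bf X26 x = x 2 * (- 2 * x 0 * x 2 + 2 * x 1 * x 2 + x 1 * x 4 + x 3 ^ 2)"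
| "Bf X27 x = x 3 * (- 2 * x 0 * x 2 + 2 * x 1 * x 2 + x 1 * x 4 + x 3 ^ 2)"
| "Bf X28 x = x 4 * (- 2 * x 0 * x 2 + 2 * x 1 * x 2 + x 1 * x 4 + x 3 ^ 2)"
| "Bf X29 x = x 0 * (- x 0 * x 4 + 2 * x 1 * x 3 + 2 * x 2 * x 3 + 3 * x 3 ^ 2)"
| "Bf X30 x = x 1 * (- x 0 * x 4 + 2 * x 1 * x 3 + 2 * x 2 * x 3 + 3 * x 3 ^ 2)"
| "Bf X31 x = x 2 * (- x 0 * x 4 + 2 * x 1 * x 3 + 2 * x 2 * x 3 + 3 * x 3 ^ 2)"
| "Bf X32 x = x 3 * (- x 0 * x 4 + 2 * x 1 * x 3 + 2 * x 2 * x 3 + 3 * x 3 ^ 2)"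
| "Bf X33 x = x 4 * (- x 0 * x 4 + 2 * x 1 * x 3 + 2 * x 2 * x 3 + 3 * x 3 ^ 2)"
| "Bf X34 x = x 4 * (- x 0 * x 3 - 2 * x 0 * x 4 + x 1 * x 2)"

definition DPhi :: "complex ^ ix \<Rightarrow> (nat \<Rightarrow> complex) \<Rightarrow> complex" where
  "DPhi v x = (\<Sum>p\<in>UNIV. v $ p * Bf p x)"

lemma Wform_Fu: "Wform (Fu u) (tu u) y = (1 + u $ X1) * y 0 ^ 3 + (0 + u $ X2) * y 0 ^ 2 * y 1 + (0 + u $ X3) * y 0 ^ 2 * y 2 + (0 + u $ X4) * y 0 ^ 2 * y 3 + (- 1 + u $ X5) * y 0 * y 1 ^ 2 + (0 + u $ X6) * y 0 * y 1 * y 2 + (0 + u $ X7) * y 0 * y 1 * y 3 + (- 1 + u $ X8) * y 0 * y 2 ^ 2 + (0 + u $ X9) * y 0 * y 2 * y 3 + (0 + u $ X10) * y 0 * y 3 ^ 2 + (0) * y 1 ^ 3 + (0 + u $ X11) * y 1 ^ 2 * y 2 + (0) * y 1 ^ 2 * y 3 + (1 + u $ X12) * y 1 * y 2 ^ 2 + (0 + u $ X13) * y 1 * y 2 * y 3 + (1) * y 1 * y 3 ^ 2 + (0) * y 2 ^ 3 + (0) * y 2 ^ 2 * y 3 + (1) * y 2 * y 3 ^ 2 + (1) * y 3 ^ 3 - y 4 * (y 0 * y 3 - y 1 * y 2) - (1 + u $ X0) * y 0 * y 4 ^ 2"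
  unfolding Wform_def Fu_eval qQ_def tu_def by (simp add: algebra_simps)

lemma vec_nth_deriv: "((\<lambda>u::complex^ix. u $ p) has_derivative (\<lambda>v. v $ p)) F"
  by (rule bounded_linear_imp_has_derivative[OF bounded_linear_vec_nth])

lemma matvec_lay_expl: "i < 5 \<Longrightarrow> matvec 5 (lay S (Nu u)) y i = y i + (\<Sum>j<5. ind ((i, j) \<in> S) * u $ ep i j * y j)"
  unfolding matvec_lay by (auto simp: ind_def Nu_def intro!: sum.cong)

lemma lay_at0: "i < 5 \<Longrightarrow> matvec 5 (lay S (Nu 0)) y i = y i"
  unfolding matvec_lay_expl by simp

lemma lay_deriv:
  assumes dY: "\<And>j. j < 5 \<Longrightarrow> ((\<lambda>u. Y u j) has_derivative Y' j) (at 0)"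
      and Y0: "\<And>j. j < 5 \<Longrightarrow> Y 0 j = P j" and i: "i < 5"
  shows "((\<lambda>u. matvec 5 (lay S (Nu u)) (Y u) i) has_derivative
           (\<lambda>v. Y' i v + (\<Sum>j<5. ind ((i, j) \<in> S) * v $ ep i j * P j))) (at 0)"
proof -
  have e: "(\<lambda>u. matvec 5 (lay S (Nu u)) (Y u) i) = (\<lambda>u. Y u i + (\<Sum>j<5. ind ((i, j) \<in> S) * u $ ep i j * Y u j))"
    using matvec_lay_expl[OF i] by auto
  have "((\<lambda>u. Y u i + (\<Sum>j<5. ind ((i, j) \<in> S) * u $ ep i j * Y u j)) has_derivative
      (\<lambda>v. Y' i v + (\<Sum>j<5. ind ((i, j) \<in> S) * 0 $ ep i j * Y' j v + ind ((i, j) \<in> S) * v $ ep i j * Y 0 j))) (at 0)"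
    by (intro has_derivative_add has_derivative_sum has_derivative_mult has_derivative_mult_right
        vec_nth_deriv dY i) auto
  moreover have "(\<Sum>j<5. ind ((i, j) \<in> S) * 0 $ ep i j * Y' j v + ind ((i, j) \<in> S) * v $ ep i j * Y 0 j) =
      (\<Sum>j<5. ind ((i, j) \<in> S) * v $ ep i j * P j)" for v
    by (rule sum.cong) (auto simp: Y0 mult.assoc)
  ultimately show ?thesis unfolding e by simp
qed

lemma Phi_chain: "Phi u P = Wform (Fu u) (tu u) (matvec 5 (lay SD (Nu u)) (matvec 5 (lay S1 (Nu u))
   (matvec 5 (lay S2 (Nu u)) (matvec 5 (lay S3 (Nu u)) (matvec 5 (lay S4 (Nu u)) P)))))"
  by (simp add: Phi_def Au_def matvec_mm)

definition Tl :: "(nat \<times> nat) set \<Rightarrow> (nat \<Rightarrow> complex) \<Rightarrow> nat \<Rightarrow> complex ^ ix \<Rightarrow> complex" where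
  "Tl S P i v = (\<Sum>j<5. ind ((i, j) \<in> S) * v $ ep i j * P j)"

lemma Phi_deriv: "((\<lambda>u. Phi u P) has_derivative (\<lambda>v. DPhi v P)) (at 0)"
proof -
  define Y4 where "Y4 = (\<lambda>u. matvec 5 (lay S4 (Nu u)) P)"
  define Y3 where "Y3 = (\<lambda>u. matvec 5 (lay S3 (Nu u)) (Y4 u))"
  define Y2 where "Y2 = (\<lambda>u. matvec 5 (lay S2 (Nu u)) (Y3 u))"
  define Y1 where "Y1 = (\<lambda>u. matvec 5 (lay S1 (Nu u)) (Y2 u))"
  define YD where "YD = (\<lambda>u. matvec 5 (lay SD (Nu u)) (Y1 u))"
  have v4: "Y4 0 j = P j" if "j < 5" for j using that by (simp add: Y4_def lay_at0)
  have v3: "Y3 0 j = P j" if "j < 5" for j using that by (simp add: Y3_def lay_at0 v4)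
  have v2: "Y2 0 j = P j" if "j < 5" for j using that by (simp add: Y2_def lay_at0 v3)
  have v1: "Y1 0 j = P j" if "j < 5" for j using that by (simp add: Y1_def lay_at0 v2)
  have vD: "YD 0 j = P j" if "j < 5" for j using that by (simp add: YD_def lay_at0 v1)
  have d4: "((\<lambda>u. Y4 u i) has_derivative (\<lambda>v. Tl S4 P i v)) (at 0)" if "i < 5" for i
    using lay_deriv[where Y="\<lambda>u. P" and Y'="\<lambda>j v. 0" and S=S4 and P=P and i=i] that unfolding Y4_def Tl_def by simp
  have d3: "((\<lambda>u. Y3 u i) has_derivative (\<lambda>v. (Tl S4 P i v) + Tl S3 P i v)) (at 0)" if "i < 5" for i
    unfolding Y3_def Tl_def[of S3] by (rule lay_deriv[where Y=Y4 and Y'="\<lambda>j v. Tl S4 P j v"]) (auto simp: that v4 d4)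
  have d2: "((\<lambda>u. Y2 u i) has_derivative (\<lambda>v. ((Tl S4 P i v) + Tl S3 P i v) + Tl S2 P i v)) (at 0)" if "i < 5" for i
    unfolding Y2_def Tl_def[of S2] by (rule lay_deriv[where Y=Y3 and Y'="\<lambda>j v. (Tl S4 P j v) + Tl S3 P j v"]) (auto simp: that v3 d3)
  have d1: "((\<lambda>u. Y1 u i) has_derivative (\<lambda>v. (((Tl S4 P i v) + Tl S3 P i v) + Tl S2 P i v) + Tl S1 P i v)) (at 0)" if "i < 5" for i
    unfolding Y1_def Tl_def[of S1] by (rule lay_deriv[where Y=Y2 and Y'="\<lambda>j v. ((Tl S4 P j v) + Tl S3 P j v) + Tl S2 P j v"]) (auto simp: that v2 d2)
  have dD: "((\<lambda>u. YD u i) has_derivative (\<lambda>v. ((((Tl S4 P i v) + Tl S3 P i v) + Tl S2 P i v) + Tl S1 P i v) + Tl SD P i v)) (at 0)" if "i < 5" for i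
    unfolding YD_def Tl_def[of SD] by (rule lay_deriv[where Y=Y1 and Y'="\<lambda>j v. (((Tl S4 P j v) + Tl S3 P j v) + Tl S2 P j v) + Tl S1 P j v"]) (auto simp: that v1 d1)
  have dD0: "((\<lambda>u. YD u 0) has_derivative (\<lambda>v. (((Tl S4 P 0 v + Tl S3 P 0 v) + Tl S2 P 0 v) + Tl S1 P 0 v) + Tl SD P 0 v)) (at 0)"
    by (rule dD) simp
  have dD1: "((\<lambda>u. YD u 1) has_derivative (\<lambda>v. (((Tl S4 P 1 v + Tl S3 P 1 v) + Tl S2 P 1 v) + Tl S1 P 1 v) + Tl SD P 1 v)) (at 0)"
    by (rule dD) simp
  have dD2: "((\<lambda>u. YD u 2) has_derivative (\<lambda>v. (((Tl S4 P 2 v + Tl S3 P 2 v) + Tl S2 P 2 v) + Tl S1 P 2 v) + Tl SD P 2 v)) (at 0)"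
    by (rule dD) simp
  have dD3: "((\<lambda>u. YD u 3) has_derivative (\<lambda>v. (((Tl S4 P 3 v + Tl S3 P 3 v) + Tl S2 P 3 v) + Tl S1 P 3 v) + Tl SD P 3 v)) (at 0)"
    by (rule dD) simp
  have dD4: "((\<lambda>u. YD u 4) has_derivative (\<lambda>v. (((Tl S4 P 4 v + Tl S3 P 4 v) + Tl S2 P 4 v) + Tl S1 P 4 v) + Tl SD P 4 v)) (at 0)"
    by (rule dD) simp
  have ph: "(\<lambda>u. Phi u P) = (\<lambda>u. Wform (Fu u) (tu u) (YD u))"
    by (simp add: Phi_chain YD_def Y1_def Y2_def Y3_def Y4_def)
  show ?thesis
    unfolding ph Wform_Fu
    apply (rule has_derivative_eq_rhs)
     apply (rule derivative_intros vec_nth_deriv dD0 dD1 dD2 dD3 dD4)+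
    apply (rule ext)
    apply (simp add: vD DPhi_def UNIV_ix Tl_def sum5 SD_def S1_def S2_def S3_def S4_def ind_def ep_def)
    apply (simp add: algebra_simps power2_eq_square)
    done
qed

primrec il :: "ix \<Rightarrow> (complex \<times> (nat \<Rightarrow> complex)) list" where
  "il X0 = [(1, pt 1 0 0 0 0)]"
| "il X1 = [((1 / 2), pt 1 1 0 0 0), ((-1 / 2), pt 1 (-1) 0 0 0), ((-1), pt 0 1 0 0 0)]"
| "il X2 = [((1 / 2), pt 1 0 1 0 0), ((-1 / 2), pt 1 0 (-1) 0 0), ((-1), pt 0 0 1 0 0)]"
| "il X3 = [((1 / 2), pt 1 0 0 1 0), ((-1 / 2), pt 1 0 0 (-1) 0), ((-1), pt 0 0 0 1 0)]"
| "il X4 = [((1 / 2), pt 1 0 0 0 1), ((-1 / 2), pt 1 0 0 0 (-1)), ((-1), pt 0 0 0 0 1)]"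
| "il X5 = [((1 / 2), pt 1 1 0 0 0), ((-1 / 2), pt (-1) 1 0 0 0), ((-1), pt 1 0 0 0 0)]"
| "il X6 = [(1, pt 1 1 1 0 0), ((-1), pt 1 1 0 0 0), ((-1), pt 1 0 1 0 0), ((-1), pt 0 1 1 0 0), (1, pt 1 0 0 0 0), (1, pt 0 1 0 0 0), (1, pt 0 0 1 0 0)]"
| "il X7 = [(1, pt 1 1 0 1 0), ((-1), pt 1 1 0 0 0), ((-1), pt 1 0 0 1 0), ((-1), pt 0 1 0 1 0), (1, pt 1 0 0 0 0), (1, pt 0 1 0 0 0), (1, pt 0 0 0 1 0)]"
| "il X8 = [(1, pt 1 1 0 0 1), ((-1), pt 1 1 0 0 0), ((-1), pt 1 0 0 0 1), ((-1), pt 0 1 0 0 1), (1, pt 1 0 0 0 0), (1, pt 0 1 0 0 0), (1, pt 0 0 0 0 1)]"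
| "il X9 = [((1 / 2), pt 1 0 1 0 0), ((-1 / 2), pt (-1) 0 1 0 0), ((-1), pt 1 0 0 0 0)]"
| "il X10 = [(1, pt 1 0 1 1 0), ((-1), pt 1 0 1 0 0), ((-1), pt 1 0 0 1 0), ((-1), pt 0 0 1 1 0), (1, pt 1 0 0 0 0), (1, pt 0 0 1 0 0), (1, pt 0 0 0 1 0)]"
| "il X11 = [(1, pt 1 0 1 0 1), ((-1), pt 1 0 1 0 0), ((-1), pt 1 0 0 0 1), ((-1), pt 0 0 1 0 1), (1, pt 1 0 0 0 0), (1, pt 0 0 1 0 0), (1, pt 0 0 0 0 1)]"
| "il X12 = [((1 / 2), pt 1 0 0 1 0), ((-1 / 2), pt (-1) 0 0 1 0), ((-1), pt 1 0 0 0 0)]"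
| "il X13 = [(1, pt 1 0 0 1 1), ((-1), pt 1 0 0 1 0), ((-1), pt 1 0 0 0 1), ((-1), pt 0 0 0 1 1), (1, pt 1 0 0 0 0), (1, pt 0 0 0 1 0), (1, pt 0 0 0 0 1)]"
| "il X14 = [((1 / 2), pt 1 0 0 0 1), ((-1 / 2), pt (-1) 0 0 0 1), ((-1), pt 1 0 0 0 0)]"
| "il X15 = [(1, pt 0 1 0 0 0)]"
| "il X16 = [((1 / 2), pt 0 1 1 0 0), ((-1 / 2), pt 0 1 (-1) 0 0), ((-1), pt 0 0 1 0 0)]"
| "il X17 = [((1 / 2), pt 0 1 0 1 0), ((-1 / 2), pt 0 1 0 (-1) 0), ((-1), pt 0 0 0 1 0)]"
| "il X18 = [((1 / 2), pt 0 1 0 0 1), ((-1 / 2), pt 0 1 0 0 (-1)), ((-1), pt 0 0 0 0 1)]"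
| "il X19 = [((1 / 2), pt 0 1 1 0 0), ((-1 / 2), pt 0 (-1) 1 0 0), ((-1), pt 0 1 0 0 0)]"
| "il X20 = [(1, pt 0 1 1 1 0), ((-1), pt 0 1 1 0 0), ((-1), pt 0 1 0 1 0), ((-1), pt 0 0 1 1 0), (1, pt 0 1 0 0 0), (1, pt 0 0 1 0 0), (1, pt 0 0 0 1 0)]"
| "il X21 = [(1, pt 0 1 1 0 1), ((-1), pt 0 1 1 0 0), ((-1), pt 0 1 0 0 1), ((-1), pt 0 0 1 0 1), (1, pt 0 1 0 0 0), (1, pt 0 0 1 0 0), (1, pt 0 0 0 0 1)]"
| "il X22 = [((1 / 2), pt 0 1 0 1 0), ((-1 / 2), pt 0 (-1) 0 1 0), ((-1), pt 0 1 0 0 0)]"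
| "il X23 = [(1, pt 0 1 0 1 1), ((-1), pt 0 1 0 1 0), ((-1), pt 0 1 0 0 1), ((-1), pt 0 0 0 1 1), (1, pt 0 1 0 0 0), (1, pt 0 0 0 1 0), (1, pt 0 0 0 0 1)]"
| "il X24 = [((1 / 2), pt 0 1 0 0 1), ((-1 / 2), pt 0 (-1) 0 0 1), ((-1), pt 0 1 0 0 0)]"
| "il X25 = [(1, pt 0 0 1 0 0)]"
| "il X26 = [((1 / 2), pt 0 0 1 1 0), ((-1 / 2), pt 0 0 1 (-1) 0), ((-1), pt 0 0 0 1 0)]"
| "il X27 = [((1 / 2), pt 0 0 1 0 1), ((-1 / 2), pt 0 0 1 0 (-1)), ((-1), pt 0 0 0 0 1)]"
| "il X28 = [((1 / 2), pt 0 0 1 1 0), ((-1 / 2), pt 0 0 (-1) 1 0), ((-1), pt 0 0 1 0 0)]"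
| "il X29 = [(1, pt 0 0 1 1 1), ((-1), pt 0 0 1 1 0), ((-1), pt 0 0 1 0 1), ((-1), pt 0 0 0 1 1), (1, pt 0 0 1 0 0), (1, pt 0 0 0 1 0), (1, pt 0 0 0 0 1)]"
| "il X30 = [((1 / 2), pt 0 0 1 0 1), ((-1 / 2), pt 0 0 (-1) 0 1), ((-1), pt 0 0 1 0 0)]"
| "il X31 = [(1, pt 0 0 0 1 0)]"
| "il X32 = [((1 / 2), pt 0 0 0 1 1), ((-1 / 2), pt 0 0 0 1 (-1)), ((-1), pt 0 0 0 0 1)]"
| "il X33 = [((1 / 2), pt 0 0 0 1 1), ((-1 / 2), pt 0 0 0 (-1) 1), ((-1), pt 0 0 0 1 0)]"
| "il X34 = [(1, pt 0 0 0 0 1)]"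

definition interp :: "ix \<Rightarrow> ((nat \<Rightarrow> complex) \<Rightarrow> complex) \<Rightarrow> complex" where
  "interp m g = (\<Sum>(r, Q)\<leftarrow>il m. r * g Q)"

lemma interp_form_aux: "interp m (form_eval 5 3 c) = c (alpha m)"
  unfolding interp_def fe5 by (cases m) (simp_all add: field_simps)

definition Kc :: "ix \<Rightarrow> ix \<Rightarrow> complex" where
  "Kc m p = (case m of X0 \<Rightarrow> (case p of X1 \<Rightarrow> 1 | _ \<Rightarrow> 0) | X1 \<Rightarrow> (case p of X2 \<Rightarrow> 1 | _ \<Rightarrow> 0) | X2 \<Rightarrow> (case p of X3 \<Rightarrow> 1 | _ \<Rightarrow> 0) | X3 \<Rightarrow> (case p of X4 \<Rightarrow> 1 | _ \<Rightarrow> 0) | X4 \<Rightarrow> (case p of X7 \<Rightarrow> 2 | X9 \<Rightarrow> 2 | X10 \<Rightarrow> 3 | X29 \<Rightarrow> (-1) | _ \<Rightarrow> 0) | X5 \<Rightarrow> (case p of X5 \<Rightarrow> 1 | _ \<Rightarrow> 0) | X6 \<Rightarrow> (case p of X6 \<Rightarrow> 1 | _ \<Rightarrow> 0) | X7 \<Rightarrow> (case p of X7 \<Rightarrow> 1 | _ \<Rightarrow> 0) | X8 \<Rightarrow> (case p of X3 \<Rightarrow> 2 | X6 \<Rightarrow> (-2) | X10 \<Rightarrow> (-1) | X24 \<Rightarrow> 1 | _ \<Rightarrow> 0) | X9 \<Rightarrow> (case p of X8 \<Rightarrow> 1 | _ \<Rightarrow> 0) | X10 \<Rightarrow> (case p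 of X9 \<Rightarrow> 1 | _ \<Rightarrow> 0) | X11 \<Rightarrow> (case p of X2 \<Rightarrow> 2 | X8 \<Rightarrow> (-1) | X10 \<Rightarrow> (-1) | X19 \<Rightarrow> 1 | _ \<Rightarrow> 0) | X12 \<Rightarrow> (case p of X10 \<Rightarrow> 1 | _ \<Rightarrow> 0) | X13 \<Rightarrow> (case p of X0 \<Rightarrow> 1 | X1 \<Rightarrow> 3 | X5 \<Rightarrow> (-1) | X8 \<Rightarrow> (-1) | X14 \<Rightarrow> (-1) | _ \<Rightarrow> 0) | X14 \<Rightarrow> (case p of X0 \<Rightarrow> (-1) | _ \<Rightarrow> 0) | X15 \<Rightarrow> (case p of X0 \<Rightarrow> (-17 / 3) | X1 \<Rightarrow> (62 / 3) | X2 \<Rightarrow> (-1 / 3) | X5 \<Rightarrow> (-10) | X7 \<Rightarrow> (-4 / 3) | X8 \<Rightarrow> (-31 / 3) | X9 \<Rightarrow> (-10 / 3) | X10 \<Rightarrow> (5 / 3) | X12 \<Rightarrow> (17 / 3) | X13 \<Rightarrow> (8 / 3) | X14 \<Rightarrow> (-62 / 9) | X15 \<Rightarrow> (-1) | X19 \<Rightarrow> (-5 / 3) | X20 \<Rightarrow> (-14 / 9) | X22 \<Rightarrow> (-2 / 3) | X26 \<Rightarrow> (-23 / 9) | X27 \<Rightarrow> (-5 / 3) | X28 \<Rightarrow> (-1) | X31 \<Rightarrow> (1 / 3) | X32 \<Rightarrow> (7 / 9) | X33 \<Rightarrow> (1 / 3) | X34 \<Rightarrow> (55 / 9) | _ \<Rightarrow>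 0) | X16 \<Rightarrow> (case p of X11 \<Rightarrow> 1 | _ \<Rightarrow> 0) | X17 \<Rightarrow> (case p of X0 \<Rightarrow> (-3 / 2) | X1 \<Rightarrow> (9 / 2) | X3 \<Rightarrow> 1 | X5 \<Rightarrow> (-9 / 2) | X6 \<Rightarrow> (-1) | X8 \<Rightarrow> (-3 / 2) | X10 \<Rightarrow> (-1 / 2) | X12 \<Rightarrow> (3 / 2) | X13 \<Rightarrow> (-1) | X14 \<Rightarrow> (-3 / 2) | X20 \<Rightarrow> (-3 / 2) | X24 \<Rightarrow> (1 / 2) | X30 \<Rightarrow> (1 / 2) | X34 \<Rightarrow> (3 / 2) | _ \<Rightarrow> 0) | X18 \<Rightarrow> (case p of X0 \<Rightarrow> (-1) | X1 \<Rightarrow> 3 | X5 \<Rightarrow> (-3) | X6 \<Rightarrow> 2 | X8 \<Rightarrow> (-1) | X11 \<Rightarrow> (-2) | X12 \<Rightarrow> 1 | X14 \<Rightarrow> (-1) | X20 \<Rightarrow> (-1) | X25 \<Rightarrow> 1 | X34 \<Rightarrow> 1 | _ \<Rightarrow> 0) | X19 \<Rightarrow> (case p of X12 \<Rightarrow> 1 | _ \<Rightarrow> 0) | X20 \<Rightarrow> (case p of X13 \<Rightarrow> 1 | _ \<Rightarrow> 0) | X21 \<Rightarrow> (case p of X0 \<Rightarrow> (-1) | X1 \<Rightarrow> 3 | X5 \<Rightarrow> (-1) | X8 \<Rightarrow> (-1) | X14 \<Rightarrow> (-1) | X34 \<Rightarrow> 1 | _ \<Rightarrow> 0) | X22 \<Rightarrow>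 (case p of X0 \<Rightarrow> 1 | X1 \<Rightarrow> (-3) | X5 \<Rightarrow> 3 | X8 \<Rightarrow> 1 | X12 \<Rightarrow> (-1) | X14 \<Rightarrow> 1 | X20 \<Rightarrow> 1 | X34 \<Rightarrow> (-1) | _ \<Rightarrow> 0) | X23 \<Rightarrow> (case p of X0 \<Rightarrow> 1 | X1 \<Rightarrow> (-5) | X5 \<Rightarrow> 3 | X8 \<Rightarrow> 3 | X9 \<Rightarrow> 2 | X12 \<Rightarrow> (-2) | X13 \<Rightarrow> (-2) | X14 \<Rightarrow> (5 / 3) | X20 \<Rightarrow> (2 / 3) | X26 \<Rightarrow> (2 / 3) | X27 \<Rightarrow> 1 | X32 \<Rightarrow> (-1 / 3) | X34 \<Rightarrow> (-4 / 3) | _ \<Rightarrow> 0) | X24 \<Rightarrow> (case p of X0 \<Rightarrow> (14 / 3) | X1 \<Rightarrow> (-47 / 3) | X2 \<Rightarrow> (10 / 3) | X5 \<Rightarrow> 7 | X7 \<Rightarrow> (4 / 3) | X8 \<Rightarrow> (22 / 3) | X9 \<Rightarrow> (4 / 3) | X10 \<Rightarrow> (-5 / 3) | X12 \<Rightarrow> (-14 / 3) | X13 \<Rightarrow> (-2 / 3) | X14 \<Rightarrow> (47 / 9) | X19 \<Rightarrow> (5 / 3) | X20 \<Rightarrow> (8 / 9) | X22 \<Rightarrow> (2 / 3) | X26 \<Rightarrow> (17 / 9) | X27 \<Rightarrow> (2 / 3) | X28 \<Rightarrow> 1 | X31 \<Rightarrow> (-1 / 3) | X32 \<Rightarrow>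 (-4 / 9) | X33 \<Rightarrow> (-1 / 3) | X34 \<Rightarrow> (-43 / 9) | _ \<Rightarrow> 0) | X25 \<Rightarrow> (case p of X0 \<Rightarrow> (-37 / 12) | X1 \<Rightarrow> (133 / 12) | X2 \<Rightarrow> (5 / 6) | X3 \<Rightarrow> (-1 / 2) | X5 \<Rightarrow> (-21 / 4) | X6 \<Rightarrow> 3 | X7 \<Rightarrow> (-5 / 3) | X8 \<Rightarrow> (-55 / 6) | X9 \<Rightarrow> (-2 / 3) | X10 \<Rightarrow> (7 / 12) | X11 \<Rightarrow> (-1 / 2) | X12 \<Rightarrow> (35 / 6) | X13 \<Rightarrow> (-1 / 6) | X14 \<Rightarrow> (-133 / 36) | X16 \<Rightarrow> (-1 / 2) | X19 \<Rightarrow> (5 / 12) | X20 \<Rightarrow> (-7 / 9) | X21 \<Rightarrow> (1 / 2) | X22 \<Rightarrow> (-5 / 6) | X23 \<Rightarrow> (-1 / 2) | X24 \<Rightarrow> (-1) | X26 \<Rightarrow> (-91 / 36) | X27 \<Rightarrow> (-1 / 3) | X31 \<Rightarrow> (5 / 12) | X32 \<Rightarrow> (7 / 18) | X33 \<Rightarrow> (1 / 6) | X34 \<Rightarrow> (119 / 36) | _ \<Rightarrow> 0) | X26 \<Rightarrow> (case p of X0 \<Rightarrow> (-3 / 2) | X1 \<Rightarrow> (9 / 2) | X2 \<Rightarrow> 1 | X5 \<Rightarrow> (-3 / 2) | X8 \<Rightarrow> (-5) | X10 \<Rightarrow> (-1 / 2) | X12 \<Rightarrow> 3 | X13 \<Rightarrow>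 (-1) | X14 \<Rightarrow> (-3 / 2) | X19 \<Rightarrow> (1 / 2) | X26 \<Rightarrow> (-3 / 2) | X31 \<Rightarrow> (1 / 2) | X34 \<Rightarrow> (3 / 2) | _ \<Rightarrow> 0) | X27 \<Rightarrow> (case p of X0 \<Rightarrow> (25 / 12) | X1 \<Rightarrow> (-97 / 12) | X2 \<Rightarrow> (-5 / 6) | X3 \<Rightarrow> (1 / 2) | X5 \<Rightarrow> (17 / 4) | X6 \<Rightarrow> (-1) | X7 \<Rightarrow> (5 / 3) | X8 \<Rightarrow> (37 / 6) | X9 \<Rightarrow> (2 / 3) | X10 \<Rightarrow> (-7 / 12) | X11 \<Rightarrow> (1 / 2) | X12 \<Rightarrow> (-23 / 6) | X13 \<Rightarrow> (1 / 6) | X14 \<Rightarrow> (97 / 36) | X16 \<Rightarrow> (1 / 2) | X19 \<Rightarrow> (-5 / 12) | X20 \<Rightarrow> (7 / 9) | X21 \<Rightarrow> (1 / 2) | X22 \<Rightarrow> (5 / 6) | X23 \<Rightarrow> (1 / 2) | X24 \<Rightarrow> 1 | X26 \<Rightarrow> (55 / 36) | X27 \<Rightarrow> (1 / 3) | X31 \<Rightarrow> (-5 / 12) | X32 \<Rightarrow> (-7 / 18) | X33 \<Rightarrow> (-1 / 6) | X34 \<Rightarrow> (-83 / 36) | _ \<Rightarrow> 0) | X28 \<Rightarrow> (case p of X0 \<Rightarrow> 1 | X1 \<Rightarrow> (-3) | X5 \<Rightarrow> 1 | X8 \<Rightarrow> 3 | X12 \<Rightarrow> (-2) | X14 \<Rightarrow>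 1 | X26 \<Rightarrow> 1 | X34 \<Rightarrow> (-1) | _ \<Rightarrow> 0) | X29 \<Rightarrow> (case p of X0 \<Rightarrow> (5 / 2) | X1 \<Rightarrow> (-19 / 2) | X2 \<Rightarrow> (-1) | X5 \<Rightarrow> (9 / 2) | X7 \<Rightarrow> 2 | X8 \<Rightarrow> 8 | X10 \<Rightarrow> (1 / 2) | X12 \<Rightarrow> (-5) | X13 \<Rightarrow> 1 | X14 \<Rightarrow> (19 / 6) | X19 \<Rightarrow> (-1 / 2) | X20 \<Rightarrow> (2 / 3) | X22 \<Rightarrow> 1 | X26 \<Rightarrow> (13 / 6) | X31 \<Rightarrow> (-1 / 2) | X32 \<Rightarrow> (-1 / 3) | X34 \<Rightarrow> (-17 / 6) | _ \<Rightarrow> 0) | X30 \<Rightarrow> (case p of X0 \<Rightarrow> (7 / 12) | X1 \<Rightarrow> (-19 / 12) | X2 \<Rightarrow> (1 / 6) | X3 \<Rightarrow> (7 / 2) | X5 \<Rightarrow> (3 / 4) | X6 \<Rightarrow> (-3) | X7 \<Rightarrow> (-1 / 3) | X8 \<Rightarrow> (7 / 6) | X9 \<Rightarrow> (2 / 3) | X10 \<Rightarrow> (-13 / 12) | X11 \<Rightarrow> (-1 / 2) | X12 \<Rightarrow> (-5 / 6) | X13 \<Rightarrow> (-5 / 6) | X14 \<Rightarrow> (19 / 36) | X16 \<Rightarrow> (-1 / 2) | X19 \<Rightarrow> (1 / 12) | X20 \<Rightarrow> (1 / 9) | X21 \<Rightarrow> (-1 / 2) | X22 \<Rightarrow> (-1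 / 6) | X23 \<Rightarrow> (1 / 2) | X24 \<Rightarrow> 1 | X26 \<Rightarrow> (13 / 36) | X27 \<Rightarrow> (1 / 3) | X31 \<Rightarrow> (1 / 12) | X32 \<Rightarrow> (-1 / 18) | X33 \<Rightarrow> (-1 / 6) | X34 \<Rightarrow> (-17 / 36) | _ \<Rightarrow> 0) | X31 \<Rightarrow> (case p of X0 \<Rightarrow> (-1) | X1 \<Rightarrow> 5 | X5 \<Rightarrow> (-3) | X8 \<Rightarrow> (-3) | X12 \<Rightarrow> 2 | X14 \<Rightarrow> (-5 / 3) | X20 \<Rightarrow> (-2 / 3) | X26 \<Rightarrow> (-2 / 3) | X32 \<Rightarrow> (1 / 3) | X34 \<Rightarrow> (4 / 3) | _ \<Rightarrow> 0) | X32 \<Rightarrow> (case p of X0 \<Rightarrow> (-8 / 3) | X1 \<Rightarrow> (29 / 3) | X2 \<Rightarrow> (2 / 3) | X5 \<Rightarrow> (-5) | X7 \<Rightarrow> (-4 / 3) | X8 \<Rightarrow> (-22 / 3) | X9 \<Rightarrow> (-4 / 3) | X10 \<Rightarrow> (-1 / 3) | X12 \<Rightarrow> (14 / 3) | X13 \<Rightarrow> (2 / 3) | X14 \<Rightarrow> (-29 / 9) | X19 \<Rightarrow> (1 / 3) | X20 \<Rightarrow> (-8 / 9) | X22 \<Rightarrow> (-2 / 3) | X26 \<Rightarrow> (-17 / 9) | X27 \<Rightarrow> (-2 / 3) | X31 \<Rightarrow> (1 / 3) | X32 \<Rightarrow> (4 / 9) | X33 \<Rightarrow> (1 / 3) |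 X34 \<Rightarrow> (25 / 9) | _ \<Rightarrow> 0) | X33 \<Rightarrow> (case p of X0 \<Rightarrow> (17 / 3) | X1 \<Rightarrow> (-56 / 3) | X2 \<Rightarrow> (-5 / 3) | X3 \<Rightarrow> (-1) | X4 \<Rightarrow> 3 | X5 \<Rightarrow> 11 | X6 \<Rightarrow> 1 | X7 \<Rightarrow> (4 / 3) | X8 \<Rightarrow> (83 / 6) | X9 \<Rightarrow> (4 / 3) | X10 \<Rightarrow> (4 / 3) | X12 \<Rightarrow> (-55 / 6) | X13 \<Rightarrow> (4 / 3) | X14 \<Rightarrow> (56 / 9) | X17 \<Rightarrow> (-1) | X19 \<Rightarrow> (-5 / 6) | X20 \<Rightarrow> (43 / 18) | X22 \<Rightarrow> (2 / 3) | X24 \<Rightarrow> (-1 / 2) | X26 \<Rightarrow> (61 / 18) | X27 \<Rightarrow> (2 / 3) | X30 \<Rightarrow> (-1 / 2) | X31 \<Rightarrow> (-5 / 6) | X32 \<Rightarrow> (-4 / 9) | X33 \<Rightarrow> (-1 / 3) | X34 \<Rightarrow> (-52 / 9) | _ \<Rightarrow> 0) | X34 \<Rightarrow> (case p of X0 \<Rightarrow> (-27 / 4) | X1 \<Rightarrow> (95 / 4) | X2 \<Rightarrow> (5 / 2) | X3 \<Rightarrow> (1 / 2) | X4 \<Rightarrow> (-3) | X5 \<Rightarrow> (-49 / 4) | X6 \<Rightarrow> (-2) | X7 \<Rightarrow> 3 | X8 \<Rightarrow> (-19) | X9 \<Rightarrow> 4 | X10 \<Rightarrow> (33 / 4) |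 X11 \<Rightarrow> (3 / 2) | X12 \<Rightarrow> 12 | X13 \<Rightarrow> (-3 / 2) | X14 \<Rightarrow> (-95 / 12) | X16 \<Rightarrow> (-1 / 2) | X17 \<Rightarrow> 1 | X18 \<Rightarrow> (-1) | X19 \<Rightarrow> (5 / 4) | X20 \<Rightarrow> (-13 / 6) | X21 \<Rightarrow> (-1 / 2) | X22 \<Rightarrow> (-3 / 2) | X23 \<Rightarrow> (-1 / 2) | X24 \<Rightarrow> (-1 / 2) | X25 \<Rightarrow> (-1) | X26 \<Rightarrow> (-59 / 12) | X27 \<Rightarrow> (-1) | X29 \<Rightarrow> (-3) | X30 \<Rightarrow> (1 / 2) | X31 \<Rightarrow> (5 / 4) | X32 \<Rightarrow> (5 / 6) | X33 \<Rightarrow> (1 / 2) | X34 \<Rightarrow> (85 / 12) | _ \<Rightarrow> 0))"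

lemma K_0: "(\<Sum>p\<in>UNIV. Kc X0 p * Bf p x) = x 0 ^ 3"
  unfolding UNIV_ix by (simp add: Kc_def, (simp add: field_simps power2_eq_square power3_eq_cube)?)

lemma K_1: "(\<Sum>p\<in>UNIV. Kc X1 p * Bf p x) = x 0 ^ 2 * x 1"
  unfolding UNIV_ix by (simp add: Kc_def, (simp add: field_simps power2_eq_square power3_eq_cube)?)

lemma K_2: "(\<Sum>p\<in>UNIV. Kc X2 p * Bf p x) = x 0 ^ 2 * x 2"
  unfolding UNIV_ix by (simp add: Kc_def, (simp add: field_simps power2_eq_square power3_eq_cube)?)

lemma K_3: "(\<Sum>p\<in>UNIV. Kc X3 p * Bf p x) = x 0 ^ 2 * x 3"
  unfolding UNIV_ix by (simp add: Kc_def, (simp add: field_simps power2_eq_square power3_eq_cube)?)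

lemma K_4: "(\<Sum>p\<in>UNIV. Kc X4 p * Bf p x) = x 0 ^ 2 * x 4"
  unfolding UNIV_ix by (simp add: Kc_def, (simp add: field_simps power2_eq_square power3_eq_cube)?)

lemma K_5: "(\<Sum>p\<in>UNIV. Kc X5 p * Bf p x) = x 0 * x 1 ^ 2"
  unfolding UNIV_ix by (simp add: Kc_def, (simp add: field_simps power2_eq_square power3_eq_cube)?)

lemma K_6: "(\<Sum>p\<in>UNIV. Kc X6 p * Bf p x) = x 0 * x 1 * x 2"
  unfolding UNIV_ix by (simp add: Kc_def, (simp add: field_simps power2_eq_square power3_eq_cube)?)

lemma K_7: "(\<Sum>p\<in>UNIV. Kc X7 p * Bf p x) = x 0 * x 1 * x 3"
  unfolding UNIV_ix by (simp add: Kc_def, (simp add: field_simps power2_eq_square power3_eq_cube)?)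

lemma K_8: "(\<Sum>p\<in>UNIV. Kc X8 p * Bf p x) = x 0 * x 1 * x 4"
  unfolding UNIV_ix by (simp add: Kc_def, (simp add: field_simps power2_eq_square power3_eq_cube)?)

lemma K_9: "(\<Sum>p\<in>UNIV. Kc X9 p * Bf p x) = x 0 * x 2 ^ 2"
  unfolding UNIV_ix by (simp add: Kc_def, (simp add: field_simps power2_eq_square power3_eq_cube)?)

lemma K_10: "(\<Sum>p\<in>UNIV. Kc X10 p * Bf p x) = x 0 * x 2 * x 3"
  unfolding UNIV_ix by (simp add: Kc_def, (simp add: field_simps power2_eq_square power3_eq_cube)?)

lemma K_11: "(\<Sum>p\<in>UNIV. Kc X11 p * Bf p x) = x 0 * x 2 * x 4"
  unfolding UNIV_ix by (simp add: Kc_def, (simp add: field_simps power2_eq_square power3_eq_cube)?)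

lemma K_12: "(\<Sum>p\<in>UNIV. Kc X12 p * Bf p x) = x 0 * x 3 ^ 2"
  unfolding UNIV_ix by (simp add: Kc_def, (simp add: field_simps power2_eq_square power3_eq_cube)?)

lemma K_13: "(\<Sum>p\<in>UNIV. Kc X13 p * Bf p x) = x 0 * x 3 * x 4"
  unfolding UNIV_ix by (simp add: Kc_def, (simp add: field_simps power2_eq_square power3_eq_cube)?)

lemma K_14: "(\<Sum>p\<in>UNIV. Kc X14 p * Bf p x) = x 0 * x 4 ^ 2"
  unfolding UNIV_ix by (simp add: Kc_def, (simp add: field_simps power2_eq_square power3_eq_cube)?)

lemma K_15: "(\<Sum>p\<in>UNIV. Kc X15 p * Bf p x) = x 1 ^ 3"
  unfolding UNIV_ix by (simp add: Kc_def, (simp add: field_simps power2_eq_square power3_eq_cube)?)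

lemma K_16: "(\<Sum>p\<in>UNIV. Kc X16 p * Bf p x) = x 1 ^ 2 * x 2"
  unfolding UNIV_ix by (simp add: Kc_def, (simp add: field_simps power2_eq_square power3_eq_cube)?)

lemma K_17: "(\<Sum>p\<in>UNIV. Kc X17 p * Bf p x) = x 1 ^ 2 * x 3"
  unfolding UNIV_ix by (simp add: Kc_def, (simp add: field_simps power2_eq_square power3_eq_cube)?)

lemma K_18: "(\<Sum>p\<in>UNIV. Kc X18 p * Bf p x) = x 1 ^ 2 * x 4"
  unfolding UNIV_ix by (simp add: Kc_def, (simp add: field_simps power2_eq_square power3_eq_cube)?)

lemma K_19: "(\<Sum>p\<in>UNIV. Kc X19 p * Bf p x) = x 1 * x 2 ^ 2"
  unfolding UNIV_ix by (simp add: Kc_def, (simp add: field_simps power2_eq_square power3_eq_cube)?)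

lemma K_20: "(\<Sum>p\<in>UNIV. Kc X20 p * Bf p x) = x 1 * x 2 * x 3"
  unfolding UNIV_ix by (simp add: Kc_def, (simp add: field_simps power2_eq_square power3_eq_cube)?)

lemma K_21: "(\<Sum>p\<in>UNIV. Kc X21 p * Bf p x) = x 1 * x 2 * x 4"
  unfolding UNIV_ix by (simp add: Kc_def, (simp add: field_simps power2_eq_square power3_eq_cube)?)

lemma K_22: "(\<Sum>p\<in>UNIV. Kc X22 p * Bf p x) = x 1 * x 3 ^ 2"
  unfolding UNIV_ix by (simp add: Kc_def, (simp add: field_simps power2_eq_square power3_eq_cube)?)

lemma K_23: "(\<Sum>p\<in>UNIV. Kc X23 p * Bf p x) = x 1 * x 3 * x 4"
  unfolding UNIV_ix by (simp add: Kc_def, (simp add: field_simps power2_eq_square power3_eq_cube)?)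

lemma K_24: "(\<Sum>p\<in>UNIV. Kc X24 p * Bf p x) = x 1 * x 4 ^ 2"
  unfolding UNIV_ix by (simp add: Kc_def, (simp add: field_simps power2_eq_square power3_eq_cube)?)

lemma K_25: "(\<Sum>p\<in>UNIV. Kc X25 p * Bf p x) = x 2 ^ 3"
  unfolding UNIV_ix by (simp add: Kc_def, (simp add: field_simps power2_eq_square power3_eq_cube)?)

lemma K_26: "(\<Sum>p\<in>UNIV. Kc X26 p * Bf p x) = x 2 ^ 2 * x 3"
  unfolding UNIV_ix by (simp add: Kc_def, (simp add: field_simps power2_eq_square power3_eq_cube)?)

lemma K_27: "(\<Sum>p\<in>UNIV. Kc X27 p * Bf p x) = x 2 ^ 2 * x 4"
  unfolding UNIV_ix by (simp add: Kc_def, (simp add: field_simps power2_eq_square power3_eq_cube)?)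

lemma K_28: "(\<Sum>p\<in>UNIV. Kc X28 p * Bf p x) = x 2 * x 3 ^ 2"
  unfolding UNIV_ix by (simp add: Kc_def, (simp add: field_simps power2_eq_square power3_eq_cube)?)

lemma K_29: "(\<Sum>p\<in>UNIV. Kc X29 p * Bf p x) = x 2 * x 3 * x 4"
  unfolding UNIV_ix by (simp add: Kc_def, (simp add: field_simps power2_eq_square power3_eq_cube)?)

lemma K_30: "(\<Sum>p\<in>UNIV. Kc X30 p * Bf p x) = x 2 * x 4 ^ 2"
  unfolding UNIV_ix by (simp add: Kc_def, (simp add: field_simps power2_eq_square power3_eq_cube)?)

lemma K_31: "(\<Sum>p\<in>UNIV. Kc X31 p * Bf p x) = x 3 ^ 3"
  unfolding UNIV_ix by (simp add: Kc_def, (simp add: field_simps power2_eq_square power3_eq_cube)?)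

lemma K_32: "(\<Sum>p\<in>UNIV. Kc X32 p * Bf p x) = x 3 ^ 2 * x 4"
  unfolding UNIV_ix by (simp add: Kc_def, (simp add: field_simps power2_eq_square power3_eq_cube)?)

lemma K_33: "(\<Sum>p\<in>UNIV. Kc X33 p * Bf p x) = x 3 * x 4 ^ 2"
  unfolding UNIV_ix by (simp add: Kc_def, (simp add: field_simps power2_eq_square power3_eq_cube)?)

lemma K_34: "(\<Sum>p\<in>UNIV. Kc X34 p * Bf p x) = x 4 ^ 3"
  unfolding UNIV_ix by (simp add: Kc_def, (simp add: field_simps power2_eq_square power3_eq_cube)?)

lemma K_all: "(\<Sum>p\<in>UNIV. Kc m p * Bf p x) = mpow 5 (alpha m) x"
  by (cases m) (simp_all only: K_0 K_1 K_2 K_3 K_4 K_5 K_6 K_7 K_8 K_9 K_10 K_11 K_12 K_13 K_14 K_15 K_16 K_17 K_18 K_19 K_20 K_21 K_22 K_23 K_24 K_25 K_26 K_27 K_28 K_29 K_30 K_31 K_32 K_33 K_34, simp_all add: mpow_def prod5)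

definition fmap :: "complex ^ ix \<Rightarrow> complex ^ ix" where "fmap u = (\<chi> m. interp m (Phi u))"
definition fder :: "complex ^ ix \<Rightarrow> complex ^ ix" where "fder v = (\<chi> m. interp m (DPhi v))"
definition ginv :: "complex ^ ix \<Rightarrow> complex ^ ix" where "ginv w = (\<chi> p. \<Sum>m\<in>UNIV. w $ m * Kc m p)"

lemma list_lin:
  fixes a :: "'k \<Rightarrow> complex" and L :: "(complex \<times> (nat \<Rightarrow> complex)) list"
  shows "(\<Sum>(r, Q)\<leftarrow>L. r * (\<Sum>k\<in>S. a k * h k Q)) = (\<Sum>k\<in>S. a k * (\<Sum>(r, Q)\<leftarrow>L. r * h k Q))"
proof (induction L)
  case Nil then show ?case by (auto intro: sum.neutral)
next
  case (Cons rq L)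
  obtain r Q where rq: "rq = (r, Q)" by fastforce
  show ?case using Cons by (simp add: rq sum_distrib_left sum.distrib algebra_simps)
qed

lemma interp_lin: "interp m (\<lambda>x. \<Sum>k\<in>S. a k * h k x) = (\<Sum>k\<in>S. a k * interp m (h k))"
  unfolding interp_def by (rule list_lin)

lemma interp_mono: "interp m' (mpow 5 (alpha m)) = (if m' = m then 1 else 0)"
proof -
  define c where "c = (\<lambda>\<alpha>. if \<alpha> = alpha m then 1 else (0::complex))"
  have "form_eval 5 3 c x = mpow 5 (alpha m) x" for x
  proof -
    have "form_eval 5 3 c x = (\<Sum>m''\<in>UNIV. if m'' = m then mpow 5 (alpha m) x else 0)"
      unfolding fe5_raw c_def by (rule sum.cong) (auto simp: inj_eq[OF alpha_inj])
    then show ?thesis by simp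
  qed
  then have "form_eval 5 3 c = mpow 5 (alpha m)" by auto
  then have "interp m' (mpow 5 (alpha m)) = c (alpha m')" using interp_form_aux[of m' c] by simp
  then show ?thesis by (simp add: c_def inj_eq[OF alpha_inj])
qed

lemma fder_ginv: "fder (ginv w) = w"
proof -
  have D: "DPhi (ginv w) = (\<lambda>x. \<Sum>m\<in>UNIV. w $ m * mpow 5 (alpha m) x)"
  proof
    fix x
    have "DPhi (ginv w) x = (\<Sum>p\<in>UNIV. \<Sum>m\<in>UNIV. w $ m * (Kc m p * Bf p x))"
      by (simp add: DPhi_def ginv_def sum_distrib_right mult.assoc)
    also have "\<dots> = (\<Sum>m\<in>UNIV. w $ m * (\<Sum>p\<in>UNIV. Kc m p * Bf p x))"
      by (subst sum.swap) (simp add: sum_distrib_left)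
    also have "\<dots> = (\<Sum>m\<in>UNIV. w $ m * mpow 5 (alpha m) x)" by (simp add: K_all)
    finally show "DPhi (ginv w) x = (\<Sum>m\<in>UNIV. w $ m * mpow 5 (alpha m) x)" .
  qed
  show ?thesis
    unfolding vec_eq_iff
  proof
    fix m'
    have "fder (ginv w) $ m' = (\<Sum>m\<in>UNIV. w $ m * interp m' (mpow 5 (alpha m)))"
      by (simp add: fder_def D interp_lin)
    also have "\<dots> = (\<Sum>m\<in>UNIV. if m = m' then w $ m else 0)"
      by (rule sum.cong) (auto simp: interp_mono)
    also have "\<dots> = w $ m'" by simp
    finally show "fder (ginv w) $ m' = w $ m'" .
  qed
qed

lemma ginv_bl: "bounded_linear ginv"
proof -
  have "linear ginv"
  proof (rule linearI)
    fix a b :: "complex ^ ix"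
    show "ginv (a + b) = ginv a + ginv b"
      by (simp add: ginv_def vec_eq_iff distrib_right sum.distrib)
  next
    fix r :: real and a :: "complex ^ ix"
    show "ginv (r *\<^sub>R a) = r *\<^sub>R ginv a"
      unfolding vec_eq_iff
    proof
      fix p
      have "ginv (r *\<^sub>R a) $ p = (\<Sum>m\<in>UNIV. r *\<^sub>R (a $ m * Kc m p))"
        by (simp add: ginv_def)
      also have "\<dots> = r *\<^sub>R ginv a $ p" by (simp add: ginv_def scaleR_sum_right)
      finally show "ginv (r *\<^sub>R a) $ p = (r *\<^sub>R ginv a) $ p" by simp
    qed
  qed
  then show ?thesis by (simp add: linear_conv_bounded_linear)
qed

lemma list_deriv:
  fixes G :: "'a::real_normed_vector \<Rightarrow> (nat \<Rightarrow> complex) \<Rightarrow> complex" and L :: "(complex \<times> (nat \<Rightarrow> complex)) list"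
  assumes "\<And>Q. ((\<lambda>u. G u Q) has_derivative G' Q) (at a)"
  shows "((\<lambda>u. \<Sum>(r, Q)\<leftarrow>L. r * G u Q) has_derivative (\<lambda>v. \<Sum>(r, Q)\<leftarrow>L. r * G' Q v)) (at a)"
proof (induction L)
  case Nil then show ?case by simp
next
  case (Cons rq L)
  obtain r Q where rq: "rq = (r, Q)" by fastforce
  show ?case unfolding rq
    using has_derivative_add[OF has_derivative_mult_right[OF assms[of Q]] Cons.IH, of r] by simp
qed

lemma list_cont:
  fixes G :: "'a::topological_space \<Rightarrow> (nat \<Rightarrow> complex) \<Rightarrow> complex" and L :: "(complex \<times> (nat \<Rightarrow> complex)) list"
  assumes "\<And>Q. continuous_on UNIV (\<lambda>u. G u Q)"
  shows "continuous_on UNIV (\<lambda>u. \<Sum>(r, Q)\<leftarrow>L. r * G u Q)"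
proof (induction L)
  case Nil then show ?case by simp
next
  case (Cons rq L)
  obtain r Q where rq: "rq = (r, Q)" by fastforce
  show ?case unfolding rq
    using continuous_on_add[OF continuous_on_mult_left[OF assms[of Q]] Cons.IH, of r] by simp
qed

lemma fmap_deriv: "(fmap has_derivative fder) (at 0)"
  unfolding fmap_def fder_def
  by (rule has_derivative_vecI) (simp add: interp_def, rule list_deriv[OF Phi_deriv])

lemma lay_cont:
  assumes "\<And>j. j < 5 \<Longrightarrow> continuous_on UNIV (\<lambda>u. Y u j)" "i < 5"
  shows "continuous_on UNIV (\<lambda>u. matvec 5 (lay S (Nu u)) (Y u) i)"
proof -
  have e: "(\<lambda>u. matvec 5 (lay S (Nu u)) (Y u) i) = (\<lambda>u. Y u i + (\<Sum>j<5. ind ((i, j) \<in> S) * u $ ep i j * Y u j))"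
    using matvec_lay_expl[OF assms(2)] by auto
  show ?thesis unfolding e
    by (intro continuous_intros assms) auto
qed

lemma Phi_cont: "continuous_on UNIV (\<lambda>u. Phi u P)"
proof -
  define Y4 where "Y4 = (\<lambda>u. matvec 5 (lay S4 (Nu u)) P)"
  define Y3 where "Y3 = (\<lambda>u. matvec 5 (lay S3 (Nu u)) (Y4 u))"
  define Y2 where "Y2 = (\<lambda>u. matvec 5 (lay S2 (Nu u)) (Y3 u))"
  define Y1 where "Y1 = (\<lambda>u. matvec 5 (lay S1 (Nu u)) (Y2 u))"
  define YD where "YD = (\<lambda>u. matvec 5 (lay SD (Nu u)) (Y1 u))"
  have c4: "continuous_on UNIV (\<lambda>u. Y4 u i)" if "i < 5" for i
    unfolding Y4_def by (rule lay_cont[where Y="\<lambda>u. P"]) (auto simp: that)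
  have c3: "continuous_on UNIV (\<lambda>u. Y3 u i)" if "i < 5" for i
    unfolding Y3_def by (rule lay_cont[where Y=Y4]) (auto simp: that c4)
  have c2: "continuous_on UNIV (\<lambda>u. Y2 u i)" if "i < 5" for i
    unfolding Y2_def by (rule lay_cont[where Y=Y3]) (auto simp: that c3)
  have c1: "continuous_on UNIV (\<lambda>u. Y1 u i)" if "i < 5" for i
    unfolding Y1_def by (rule lay_cont[where Y=Y2]) (auto simp: that c2)
  have cD: "continuous_on UNIV (\<lambda>u. YD u i)" if "i < 5" for i
    unfolding YD_def by (rule lay_cont[where Y=Y1]) (auto simp: that c1)
  have ph: "(\<lambda>u. Phi u P) = (\<lambda>u. Wform (Fu u) (tu u) (YD u))"
    by (simp add: Phi_chain YD_def Y1_def Y2_def Y3_def Y4_def)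
  have c0: "continuous_on UNIV (\<lambda>u. YD u 0)" "continuous_on UNIV (\<lambda>u. YD u 1)"
    "continuous_on UNIV (\<lambda>u. YD u 2)" "continuous_on UNIV (\<lambda>u. YD u 3)" "continuous_on UNIV (\<lambda>u. YD u 4)"
    using cD by auto
  show ?thesis unfolding ph Wform_Fu
    by (intro continuous_intros c0)
qed

lemma fmap_cont: "continuous_on UNIV fmap"
  unfolding fmap_def
  by (intro continuous_on_vec_lambda) (simp add: interp_def, rule list_cont[OF Phi_cont])

lemma fmap_open:
  assumes "\<delta> > 0"
  shows "\<exists>\<epsilon>>0. ball (fmap 0) \<epsilon> \<subseteq> fmap ` ball 0 \<delta>"
proof -
  have "fmap 0 \<in> interior (fmap ` ball 0 \<delta>)"
    by (rule sussmann_open_mapping[where S=UNIV and f'=fder and g'=ginv])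
      (auto simp: fmap_cont fmap_deriv ginv_bl fder_ginv fun_eq_iff assms)
  then show ?thesis by (meson mem_interior)
qed

definition tof5 :: "complex \<times> complex \<times> complex \<times> complex \<times> complex \<Rightarrow> nat \<Rightarrow> complex" where
  "tof5 y = pt (fst y) (fst (snd y)) (fst (snd (snd y))) (fst (snd (snd (snd y)))) (snd (snd (snd (snd y))))"
definition tup5 :: "(nat \<Rightarrow> complex) \<Rightarrow> complex \<times> complex \<times> complex \<times> complex \<times> complex" where
  "tup5 x = (x 0, x 1, x 2, x 3, x 4)"
definition tof4 :: "complex \<times> complex \<times> complex \<times> complex \<Rightarrow> nat \<Rightarrow> complex" where
  "tof4 y = pt (fst y) (fst (snd y)) (fst (snd (snd y))) (snd (snd (snd y))) 0"
definition tup4 :: "(nat \<Rightarrow> complex) \<Rightarrow> complex \<times> complex \<times> complex \<times> complex" where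
  "tup4 x = (x 0, x 1, x 2, x 3)"

lemma tof5_scale: "i < 5 \<Longrightarrow> tof5 (s *\<^sub>R tup5 x) i = complex_of_real s * x i"
  by (auto simp: tof5_def tup5_def pt_def less_Suc_eq eval_nat_numeral scaleR_conv_of_real)

lemma tof4_scale: "i < 4 \<Longrightarrow> tof4 (s *\<^sub>R tup4 x) i = complex_of_real s * x i"
  by (auto simp: tof4_def tup4_def pt_def less_Suc_eq eval_nat_numeral scaleR_conv_of_real)

lemma tup5_nz: "nonzero_vec 5 x \<Longrightarrow> tup5 x \<noteq> 0"
  by (auto simp: tup5_def nonzero_vec5 zero_prod_def)

lemma tup4_nz: "nonzero_vec 4 x \<Longrightarrow> tup4 x \<noteq> 0"
  by (auto simp: tup4_def nonzero_vec4 zero_prod_def)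

lemma tof5_nz: "y \<noteq> 0 \<Longrightarrow> nonzero_vec 5 (tof5 y)"
  by (cases y) (auto simp: tof5_def nonzero_vec5 zero_prod_def)

lemma tof4_nz: "y \<noteq> 0 \<Longrightarrow> nonzero_vec 4 (tof4 y)"
  by (cases y) (auto simp: tof4_def nonzero_vec4 zero_prod_def)

lemma sphere_scale:
  fixes t :: "'a::real_normed_vector"
  assumes "t \<noteq> 0"
  shows "(1 / norm t) *\<^sub>R t \<in> sphere 0 1"
  using assms by simp

section \<open>Openness of smoothness along a line of cubic threefolds\<close>

definition cl :: "((nat \<Rightarrow> nat) \<Rightarrow> complex) \<Rightarrow> complex \<Rightarrow> (nat \<Rightarrow> nat) \<Rightarrow> complex" where
  "cl c \<tau> = (\<lambda>\<alpha>. W0c \<alpha> + \<tau> * (c \<alpha> - W0c \<alpha>))"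

definition H1 :: "((nat \<Rightarrow> nat) \<Rightarrow> complex) \<Rightarrow> complex \<times> (complex \<times> complex \<times> complex \<times> complex \<times> complex) \<Rightarrow> real" where
  "H1 c z = (\<Sum>j<5. (cmod (form_deriv 5 3 (cl c (fst z)) j (tof5 (snd z))))\<^sup>2)"

lemma H1_cont: "continuous_on UNIV (H1 c)"
  unfolding H1_def[abs_def] sum5 fd5_0 fd5_1 fd5_2 fd5_3 fd5_4
  by (simp add: cl_def tof5_def, intro continuous_intros)

lemma H1_zero: "H1 c z = 0 \<Longrightarrow> j < 5 \<Longrightarrow> form_deriv 5 3 (cl c (fst z)) j (tof5 (snd z)) = 0"
  unfolding H1_def
  by (subst (asm) sum_nonneg_eq_0_iff) auto

lemma cl_forms: "c \<in> forms 5 3 \<Longrightarrow> cl c \<tau> \<in> forms 5 3"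
  using W0c_forms by (auto simp: forms_def cl_def)

lemma cl_0: "cl c 0 = W0c" by (simp add: cl_def)

lemma smooth_open:
  assumes c: "c \<in> forms 5 3"
  shows "\<exists>e>0. \<forall>\<tau>. norm \<tau> < e \<longrightarrow> smooth_form 5 3 (cl c \<tau>)"
proof -
  have ne: "H1 c (0, y) \<noteq> 0" if "y \<in> sphere 0 1" for y
  proof
    assume h: "H1 c (0, y) = 0"
    have "y \<noteq> 0" using that by auto
    then have nz: "nonzero_vec 5 (tof5 y)" by (rule tof5_nz)
    have "\<forall>j<5. form_deriv 5 3 W0c j (tof5 y) = 0" using H1_zero[OF h] by (simp add: cl_0)
    then show False using smooth_W0 nz unfolding smooth_form_def by blast
  qed
  obtain e where e: "e > 0" "\<And>\<tau>. dist \<tau> 0 < e \<Longrightarrow> \<forall>y\<in>sphere 0 1. H1 c (\<tau>, y) \<noteq> 0"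
    using nonvanish_near[OF H1_cont compact_sphere ne] by blast
  show ?thesis
  proof (intro exI[of _ e] conjI allI impI)
    fix \<tau> :: complex assume t: "norm \<tau> < e"
    show "smooth_form 5 3 (cl c \<tau>)"
      unfolding smooth_form_def
    proof (intro conjI cl_forms[OF c] allI impI notI)
      fix x assume nz: "nonzero_vec 5 x" and d: "\<forall>j<5. form_deriv 5 3 (cl c \<tau>) j x = 0"
      define s where "s = 1 / norm (tup5 x)"
      define y where "y = s *\<^sub>R tup5 x"
      have y: "y \<in> sphere 0 1" unfolding y_def s_def by (rule sphere_scale[OF tup5_nz[OF nz]])
      have "form_deriv 5 3 (cl c \<tau>) j (tof5 y) = 0" if "j < 5" for j
      proof -
        have "form_deriv 5 3 (cl c \<tau>) j (tof5 y) = form_deriv 5 3 (cl c \<tau>) j (\<lambda>i. complex_of_real s * x i)"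
          by (rule form_deriv_cong) (simp add: y_def tof5_scale)
        also have "\<dots> = (complex_of_real s) ^ 2 * form_deriv 5 3 (cl c \<tau>) j x"
          by (simp add: form_deriv_scale)
        finally show ?thesis using d that by simp
      qed
      then have "H1 c (\<tau>, y) = 0" by (simp add: H1_def)
      moreover have "dist \<tau> 0 < e" using t by simp
      ultimately show False using e(2) y by blast
    qed
  qed (use e in auto)
qed

definition H2 :: "(complex ^ ix) \<times> ((complex \<times> complex \<times> complex \<times> complex) \<times> (complex \<times> complex)) \<Rightarrow> real" where
  "H2 z = (cmod (form_eval 4 3 (Fu (fst z)) (tof4 (fst (snd z)))))\<^sup>2 + (cmod (qQ (tof4 (fst (snd z)))))\<^sup>2
     + (\<Sum>j<4. (cmod (fst (snd (snd z)) * form_deriv 4 3 (Fu (fst z)) j (tof4 (fst (snd z)))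
                      + snd (snd (snd z)) * qgrad (tof4 (fst (snd z))) j))\<^sup>2)"

lemma H2_cont: "continuous_on UNIV H2"
  unfolding H2_def[abs_def] sum4 fe4 fd4_0 fd4_1 fd4_2 fd4_3
  by (simp add: Fu_def tof4_def qQ_def qgrad_def, intro continuous_intros)

lemma H2_zero:
  assumes "H2 (u, y, l, m) = 0"
  shows "form_eval 4 3 (Fu u) (tof4 y) = 0" "qQ (tof4 y) = 0"
    "\<forall>j<4. l * form_deriv 4 3 (Fu u) j (tof4 y) + m * qgrad (tof4 y) j = 0"
proof -
  have a: "(cmod (form_eval 4 3 (Fu u) (tof4 y)))\<^sup>2 + (cmod (qQ (tof4 y)))\<^sup>2
     + (\<Sum>j<4. (cmod (l * form_deriv 4 3 (Fu u) j (tof4 y) + m * qgrad (tof4 y) j))\<^sup>2) = 0"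
    using assms by (simp add: H2_def)
  have nn: "0 \<le> (\<Sum>j<4. (cmod (l * form_deriv 4 3 (Fu u) j (tof4 y) + m * qgrad (tof4 y) j))\<^sup>2)"
    by (intro sum_nonneg) auto
  have z1: "(cmod (form_eval 4 3 (Fu u) (tof4 y)))\<^sup>2 = 0" and z2: "(cmod (qQ (tof4 y)))\<^sup>2 = 0"
    and z3: "(\<Sum>j<4. (cmod (l * form_deriv 4 3 (Fu u) j (tof4 y) + m * qgrad (tof4 y) j))\<^sup>2) = 0"
    using a nn by (smt (verit) zero_le_power2)+
  show "form_eval 4 3 (Fu u) (tof4 y) = 0" using z1 by simp
  show "qQ (tof4 y) = 0" using z2 by simp
  show "\<forall>j<4. l * form_deriv 4 3 (Fu u) j (tof4 y) + m * qgrad (tof4 y) j = 0"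
    using z3 by (subst (asm) sum_nonneg_eq_0_iff) auto
qed

lemma Fu_0: "Fu 0 = F0c" by (simp add: Fu_def fun_eq_iff)

lemma qQ_scale: "qQ (tof4 (s *\<^sub>R tup4 x)) = (complex_of_real s)\<^sup>2 * qQ x"
  by (simp add: qQ_def tof4_scale power2_eq_square algebra_simps)

lemma qgrad_scale: "j < 4 \<Longrightarrow> qgrad (tof4 (s *\<^sub>R tup4 x)) j = complex_of_real s * qgrad x j"
  by (auto simp: qgrad_def tof4_scale)

lemma curve_open: "\<exists>e>0. \<forall>u. norm u < e \<longrightarrow> smooth_curve_on_Q (Fu u)"
proof -
  define K where "K = (sphere (0::complex \<times> complex \<times> complex \<times> complex) 1) \<times> (sphere (0::complex \<times> complex) 1)"
  have cK: "compact K" unfolding K_def by (intro compact_Times compact_sphere)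
  have ne: "H2 (0, k) \<noteq> 0" if "k \<in> K" for k
  proof
    assume h: "H2 (0, k) = 0"
    obtain y l m where k: "k = (y, l, m)" by (metis prod.collapse)
    have y: "y \<noteq> 0" and lm: "(l, m) \<noteq> (0, 0)" using that by (auto simp: K_def k zero_prod_def[symmetric])
    note z = H2_zero[OF h[unfolded k]]
    have "nonzero_vec 4 (tof4 y) \<and> form_eval 4 3 F0c (tof4 y) = 0 \<and> qQ (tof4 y) = 0"
      using z tof4_nz[OF y] by (simp add: Fu_0)
    moreover have "\<exists>l m. (l, m) \<noteq> (0, 0) \<and> (\<forall>j<4. l * form_deriv 4 3 F0c j (tof4 y) + m * qgrad (tof4 y) j = 0)"
      using z lm by (auto simp: Fu_0)
    ultimately show False using smooth_F0 unfolding smooth_curve_on_Q_def by blast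
  qed
  obtain e where e: "e > 0" "\<And>u. dist u 0 < e \<Longrightarrow> \<forall>k\<in>K. H2 (u, k) \<noteq> 0"
    using nonvanish_near[OF H2_cont cK ne] by blast
  show ?thesis
  proof (intro exI[of _ e] conjI allI impI)
    fix u :: "complex ^ ix" assume un: "norm u < e"
    show "smooth_curve_on_Q (Fu u)"
      unfolding smooth_curve_on_Q_def
    proof (intro allI impI notI)
      fix x assume a: "nonzero_vec 4 x \<and> form_eval 4 3 (Fu u) x = 0 \<and> qQ x = 0"
        and b: "\<exists>l m. (l, m) \<noteq> (0, 0) \<and> (\<forall>j<4. l * form_deriv 4 3 (Fu u) j x + m * qgrad x j = 0)"
      obtain l m where lm: "(l, m) \<noteq> (0, 0)" and d: "\<forall>j<4. l * form_deriv 4 3 (Fu u) j x + m * qgrad x j = 0"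
        using b by blast
      define s where "s = 1 / norm (tup4 x)"
      have s0: "s \<noteq> 0" using tup4_nz a by (simp add: s_def)
      define y where "y = s *\<^sub>R tup4 x"
      have y: "y \<in> sphere 0 1" unfolding y_def s_def by (rule sphere_scale[OF tup4_nz]) (use a in simp)
      define \<rho> where "\<rho> = norm (l, m * complex_of_real s)"
      have lm': "(l, m * complex_of_real s) \<noteq> 0" using lm s0 by (auto simp: zero_prod_def)
      define w where "w = (1 / \<rho>) *\<^sub>R (l, m * complex_of_real s)"
      have w: "w \<in> sphere 0 1" unfolding w_def \<rho>_def by (rule sphere_scale[OF lm'])
      have cg: "\<And>i. i < 4 \<Longrightarrow> tof4 y i = complex_of_real s * x i" by (simp add: y_def tof4_scale)
      have e1: "form_eval 4 3 (Fu u) (tof4 y) = 0"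
      proof -
        have "form_eval 4 3 (Fu u) (tof4 y) = form_eval 4 3 (Fu u) (\<lambda>i. complex_of_real s * x i)"
          by (rule form_eval_cong) (simp add: cg)
        then show ?thesis using a by (simp add: form_eval_scale)
      qed
      have e2: "qQ (tof4 y) = 0" using a by (simp add: y_def qQ_scale)
      have e3: "fst w * form_deriv 4 3 (Fu u) j (tof4 y) + snd w * qgrad (tof4 y) j = 0" if j: "j < 4" for j
      proof -
        have "form_deriv 4 3 (Fu u) j (tof4 y) = form_deriv 4 3 (Fu u) j (\<lambda>i. complex_of_real s * x i)"
          by (rule form_deriv_cong) (simp add: cg)
        also have "\<dots> = (complex_of_real s)\<^sup>2 * form_deriv 4 3 (Fu u) j x" by (simp add: form_deriv_scale)
        finally have fd: "form_deriv 4 3 (Fu u) j (tof4 y) = (complex_of_real s)\<^sup>2 * form_deriv 4 3 (Fu u) j x" .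
        have qg: "qgrad (tof4 y) j = complex_of_real s * qgrad x j" using j by (simp add: y_def qgrad_scale)
        have "fst w * form_deriv 4 3 (Fu u) j (tof4 y) + snd w * qgrad (tof4 y) j
            = complex_of_real (1 / \<rho>) * (complex_of_real s)\<^sup>2 * (l * form_deriv 4 3 (Fu u) j x + m * qgrad x j)"
          by (simp add: w_def fd qg scaleR_conv_of_real power2_eq_square algebra_simps)
        then show ?thesis using d j by simp
      qed
      obtain l' m' where w': "w = (l', m')" by fastforce
      have "H2 (u, y, l', m') = 0"
        using e1 e2 e3 by (simp add: H2_def w')
      moreover have "(y, l', m') \<in> K" using y w by (simp add: K_def w')
      moreover have "dist u 0 < e" using un by simp
      ultimately show False using e(2) by blast
    qed
  qed (use e in auto)
qed

lemma lay_Nu0: "lay S (Nu 0) = (\<lambda>i j. if i = j then 1 else 0)"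
  by (auto simp: lay_def Nu_def fun_eq_iff)

lemma matvec_id: "matvec 5 (\<lambda>i j. if i = j then 1 else 0) y = (\<lambda>i. if i < 5 then y i else 0)"
proof
  fix i
  have "matvec 5 (\<lambda>i j. if i = j then 1 else 0) y i = (\<Sum>j<5. if j = i then y i else 0)"
    unfolding matvec_def by (rule sum.cong) auto
  then show "matvec 5 (\<lambda>i j. if i = j then 1 else 0) y i = (if i < 5 then y i else 0)" by simp
qed

lemma Phi_0: "Phi 0 x = form_eval 5 3 W0c x"
proof -
  have "Phi 0 x = Wform (Fu 0) (tu 0) x"
    by (simp add: Phi_chain lay_Nu0 matvec_id Wform_Fu)
  also have "\<dots> = form_eval 5 3 W0c x" by (simp add: Fu_0 tu_def Wform_F0)
  finally show ?thesis .
qed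

lemma norm_vec_l1: "norm (x :: complex ^ ix) \<le> (\<Sum>i\<in>UNIV. norm (x $ i))"
  unfolding norm_vec_def by (rule L2_set_le_sum) auto

theorem lemma5p1:
  shows "zariski_dense_in image_cubics (forms 5 3)"
  unfolding zariski_dense_in_def
proof (intro conjI allI impI ballI)
  show "image_cubics \<subseteq> forms 5 3" by (auto simp: image_cubics_def smooth_form_def)
next
  fix p :: "((nat \<Rightarrow> nat) \<Rightarrow> complex) \<Rightarrow> complex" and c
  assume hp: "poly_fun p \<and> (\<forall>c\<in>image_cubics. p c = 0)" and c: "c \<in> forms 5 3"
  obtain e1 where e1: "e1 > 0" "\<And>\<tau>. norm \<tau> < e1 \<Longrightarrow> smooth_form 5 3 (cl c \<tau>)"
    using smooth_open[OF c] by blast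
  obtain e2 where e2: "e2 > 0" "\<And>u. norm u < e2 \<Longrightarrow> smooth_curve_on_Q (Fu u)"
    using curve_open by blast
  define \<delta> where "\<delta> = min e2 (1/2)"
  have \<delta>: "\<delta> > 0" using e2 by (simp add: \<delta>_def)
  obtain \<epsilon> where \<epsilon>: "\<epsilon> > 0" "ball (fmap 0) \<epsilon> \<subseteq> fmap ` ball 0 \<delta>"
    using fmap_open[OF \<delta>] by blast
  define cv where "cv d = (\<chi> m. d (alpha m))" for d :: "(nat \<Rightarrow> nat) \<Rightarrow> complex"
  have f0: "fmap 0 = cv W0c"
  proof -
    have "Phi 0 = form_eval 5 3 W0c" using Phi_0 by auto
    then show ?thesis by (simp add: fmap_def cv_def interp_form_aux)
  qed
  define M where "M = (\<Sum>m\<in>UNIV. cmod (c (alpha m) - W0c (alpha m))) + 1"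
  have M: "M > 0" unfolding M_def by (smt (verit) sum_nonneg norm_ge_zero)
  define e where "e = min e1 (\<epsilon> / M)"
  have e: "e > 0" using e1 \<epsilon> M by (simp add: e_def)
  have mem: "cl c \<tau> \<in> image_cubics" if t: "norm \<tau> < e" for \<tau>
  proof -
    have "dist (fmap 0) (cv (cl c \<tau>)) \<le> (\<Sum>m\<in>UNIV. norm ((cv W0c - cv (cl c \<tau>)) $ m))"
      unfolding f0 dist_norm by (rule norm_vec_l1)
    also have "\<dots> = cmod \<tau> * (\<Sum>m\<in>UNIV. cmod (c (alpha m) - W0c (alpha m)))"
      by (simp add: cv_def cl_def sum_distrib_left norm_mult)
    also have "\<dots> \<le> cmod \<tau> * M" by (intro mult_left_mono) (auto simp: M_def)
    also have "\<dots> < (\<epsilon> / M) * M" using t M by (intro mult_strict_right_mono) (auto simp: e_def)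
    also have "\<dots> = \<epsilon>" using M by simp
    finally have "cv (cl c \<tau>) \<in> ball (fmap 0) \<epsilon>" by simp
    then have "cv (cl c \<tau>) \<in> fmap ` ball 0 \<delta>" by (rule subsetD[OF \<epsilon>(2)])
    then obtain u where u: "u \<in> ball 0 \<delta>" "fmap u = cv (cl c \<tau>)" by (metis imageE)
    have nu: "norm u < \<delta>" using u(1) by simp
    obtain d where d: "d \<in> forms 5 3" "\<And>x. Phi u x = form_eval 5 3 d x"
      using Phi_isform[of u] unfolding isform_def by blast
    have Pd: "Phi u = form_eval 5 3 d" using d(2) by auto
    have dm: "d (alpha m) = cl c \<tau> (alpha m)" for m
    proof -
      have "fmap u $ m = d (alpha m)" by (simp add: fmap_def Pd interp_form_aux)
      then show ?thesis using u(2) by (simp add: cv_def)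
    qed
    have dcl: "d = cl c \<tau>"
    proof
      fix \<alpha>
      show "d \<alpha> = cl c \<tau> \<alpha>"
      proof (cases "\<alpha> \<in> mons 5 3")
        case True
        then obtain m where "\<alpha> = alpha m" by (auto simp: mons5)
        then show ?thesis by (simp add: dm)
      next
        case False
        then show ?thesis using d(1) cl_forms[OF c, of \<tau>] by (simp add: forms_def)
      qed
    qed
    have inv: "1 + u $ ep i i \<noteq> 0" for i
    proof
      assume "1 + u $ ep i i = 0"
      then have "u $ ep i i = -1" by (simp add: add_eq_0_iff)
      then have "norm (u $ ep i i) = 1" by simp
      moreover have "norm (u $ ep i i) \<le> norm u" by (rule Finite_Cartesian_Product.norm_nth_le)
      ultimately show False using nu by (simp add: \<delta>_def)
    qed
    show "cl c \<tau> \<in> image_cubics"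
      unfolding image_cubics_def
    proof (intro CollectI conjI exI)
      show "smooth_form 5 3 (cl c \<tau>)" using e1(2) t by (simp add: e_def)
      show "Fu u \<in> U0" using Fu_U0 e2(2) nu by (simp add: \<delta>_def)
      show "invertible_mat 5 (Au u)" by (rule Au_invertible) (simp add: inv)
      show "(1::complex) \<noteq> 0" by simp
      show "\<forall>x. form_eval 5 3 (cl c \<tau>) x = 1 * Wform (Fu u) (tu u) (matvec 5 (Au u) x)"
        using d(2) by (simp add: dcl[symmetric] Phi_def)
    qed
  qed
  obtain Q where Q: "\<forall>\<tau>. p (\<lambda>i. W0c i + \<tau> * (c i - W0c i)) = poly Q \<tau>"
    using poly_fun_line[of p W0c "\<lambda>i. c i - W0c i"] hp by blast
  have "Q = 0"
  proof (rule poly_zero_on_ball[OF e])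
    fix \<tau> :: complex assume "norm \<tau> < e"
    then have "p (cl c \<tau>) = 0" using hp mem by blast
    then show "poly Q \<tau> = 0" using Q by (simp add: cl_def)
  qed
  have c1: "(\<lambda>i. W0c i + 1 * (c i - W0c i)) = c" by (simp add: fun_eq_iff)
  have "p (\<lambda>i. W0c i + 1 * (c i - W0c i)) = poly Q 1" using Q by blast
  then show "p c = 0" using \<open>Q = 0\<close> c1 by simp
qed

end
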